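(* Let $n\ge 1$ and let $(\phi_1^{k},\phi_2^{k})\in\vec{\mathcal C}^{\mathcal G}_{\rm per}$ for $k=n-1,n$, with $\overline{\phi_i^{n-1}}=\overline{\phi_i^{n}}$ for $i=1,2$. Then, for every $\Delta t>0$, $h>0$ and constants $A_1,A_2\ge0$, there exists a unique $(\phi_1^{n+1},\phi_2^{n+1})\in\vec{\mathcal C}^{\mathcal G}_{\rm per}$ solving the BDF2 scheme at step $n+1$, and it satisfies $\overline{\phi_i^{n+1}}=\overline{\phi_i^{n}}$ for $i=1,2$. In particular, at every grid point, $\phi_1^{n+1}>0$, $\phi_2^{n+1}>0$ and $\phi_1^{n+1}+\phi_2^{n+1}<1$.
   Context: Discrete setting. Fix $L>0$, $N\in\mathbb N$, $h=L/N$, $\Omega=(0,L)^2$. $\mathcal C_{\rm per}$ is the space of real grid functions $\nu=(\nu_{i,j})_{i,j\in\mathbb Z}$ with $\nu_{i+aN,j+bN}=\nu_{i,j}$ for all integers $i,j,a,b$ ($\nu_{i,j}$ is the value at the cell centre $((i-\tfrac12)h,(j-\tfrac12)h)$); periodic face-centred functions are indexed by $(i+\frac12,j)$ (east-west faces) or $(i,j+\frac12)$ (north-south faces). Define $(A_x\nu)_{i+\frac12,j}=\tfrac12(\nu_{i+1,j}+\nu_{i,j})$, $(D_x\nu)_{i+\frac12,j}=\tfrac1h(\nu_{i+1,j}-\nu_{i,j})$, and for east-west face functions $f$, $(a_xf)_{i,j}=\tfrac12(f_{i+\frac12,j}+f_{i-\frac12,j})$, $(d_xf)_{i,j}=\tfrac1h(f_{i+\frac12,j}-f_{i-\frac12,j})$;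 $A_y,D_y,a_y,d_y$ are defined analogously in the second index. $\nabla_h\nu=(D_x\nu,D_y\nu)$, $\nabla_h\cdot(f^x,f^y)=d_xf^x+d_yf^y$, $\Delta_h\nu=d_x(D_x\nu)+d_y(D_y\nu)$ (the 5-point Laplacian). For $\nu,\xi\in\mathcal C_{\rm per}$: $\langle\nu,\xi\rangle=h^2\sum_{i,j=1}^N\nu_{i,j}\xi_{i,j}$, $\|\nu\|_2=\langle\nu,\nu\rangle^{1/2}$, $\|\nu\|_\infty=\max_{1\le i,j\le N}|\nu_{i,j}|$, $\|\nabla_h\nu\|_2^2=\langle a_x((D_x\nu)^2)+a_y((D_y\nu)^2),1\rangle$, $\overline{\nu}=|\Omega|^{-1}\langle\nu,1\rangle$. For $\overline\nu=0$, $(-\Delta_h)^{-1}\nu$ denotes the unique mean-zero $\psi\in\mathcal C_{\rm per}$ with $-\Delta_h\psi=\nu$; for mean-zero $\nu,\xi$, $\langle\nu,\xi\rangle_{-1,h}=\langle\nu,(-\Delta_h)^{-1}\xi\rangle$ and $\|\nu\|_{-1,h}=\langle\nu,\nu\rangle_{-1,h}^{1/2}$. Functions of grid functions (products, quotients, $\ln$) act pointwise. Model. $M_0,N_0>0$, $\alpha=\pi((M_0/\pi)^{1/2}+N_0/2)^2$, $\beta=2(M_0/\pi)^{1/2}+N_0$; $\varepsilon_1,\varepsilon_2,\varepsilon_3>0$; $\chi_{12},\chi_{13},\chi_{23}>0$ with $4\chi_{13}\chi_{23}-(\chi_{12}-\chi_{13}-\chi_{23})^2>0$; mobilities $\mathcal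 M_1,\mathcal M_2>0$. For $a,b>0$, $a+b<1$: $S(a,b)=\frac{a}{M_0}\ln\frac{\alpha a}{M_0}+\frac{b}{N_0}\ln\frac{\beta b}{N_0}+(1-a-b)\ln(1-a-b)$, $H(a,b)=\chi_{12}ab+\chi_{13}a(1-a-b)+\chi_{23}b(1-a-b)$; thus $\partial_aS=\frac1{M_0}\ln\frac{\alpha a}{M_0}+\frac1{M_0}-\ln(1-a-b)-1$, $\partial_bS=\frac1{N_0}\ln\frac{\beta b}{N_0}+\frac1{N_0}-\ln(1-a-b)-1$, $\partial_aH=\chi_{13}-2\chi_{13}a+(\chi_{12}-\chi_{13}-\chi_{23})b$, $\partial_bH=\chi_{23}-2\chi_{23}b+(\chi_{12}-\chi_{13}-\chi_{23})a$. $\kappa(s)=1/(36s)$. The Gibbs triangle is $\mathcal G=\{(a,b):a>0,b>0,a+b<1\}$, and $\vec{\mathcal C}^{\mathcal G}_{\rm per}$ is the set of pairs $(\phi_1,\phi_2)\in\mathcal C_{\rm per}^2$ with $((\phi_1)_{i,j},(\phi_2)_{i,j})\in\mathcal G$ for all $i,j$. For such a pair set $u_1=\phi_1$, $u_2=\phi_2$, $u_3=1-\phi_1-\phi_2$ and, for $k=1,2,3$, $T_k(\phi_1,\phi_2)=a_x(\kappa'(A_xu_k)(D_xu_k)^2)-2d_x(\kappa(A_xu_k)D_xu_k)+a_y(\kappa'(A_yu_k)(D_yu_k)^2)-2d_y(\kappa(A_yu_k)D_yu_k)$. Discrete energy: $G_h(\phi_1,\phi_2)=\langle S(\phi_1,\phi_2)+H(\phi_1,\phi_2),1\rangle+\sum_{k=1}^3\varepsilon_k^2\langle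 a_x(\kappa(A_xu_k)(D_xu_k)^2)+a_y(\kappa(A_yu_k)(D_yu_k)^2),1\rangle$. Convex-part derivatives: $\delta_{\phi_1}G_{h,c}(\phi_1,\phi_2)=\partial_aS(\phi_1,\phi_2)+\varepsilon_1^2T_1-\varepsilon_3^2T_3$, $\delta_{\phi_2}G_{h,c}(\phi_1,\phi_2)=\partial_bS(\phi_1,\phi_2)+\varepsilon_2^2T_2-\varepsilon_3^2T_3$. BDF2 scheme. Fix $\Delta t>0$ and constants $A_1,A_2\ge0$. For $n\ge1$, given $(\phi_1^{k},\phi_2^{k})$, $k=n-1,n$, set $\hat\phi_i^n=2\phi_i^n-\phi_i^{n-1}$. A pair $(\phi_1^{n+1},\phi_2^{n+1})\in\vec{\mathcal C}^{\mathcal G}_{\rm per}$ solves the scheme at step $n+1$ if for $i=1,2$: $\frac{3\phi_i^{n+1}-4\phi_i^n+\phi_i^{n-1}}{2\Delta t}=\mathcal M_i\Delta_h\mu_i^{n+1}$, where $\mu_1^{n+1}=\delta_{\phi_1}G_{h,c}(\phi_1^{n+1},\phi_2^{n+1})+\partial_aH(\hat\phi_1^n,\hat\phi_2^n)-A_1\Delta t\,\Delta_h(\phi_1^{n+1}-\phi_1^n)$ and $\mu_2^{n+1}=\delta_{\phi_2}G_{h,c}(\phi_1^{n+1},\phi_2^{n+1})+\partial_bH(\hat\phi_1^n,\hat\phi_2^n)-A_2\Delta t\,\Delta_h(\phi_2^{n+1}-\phi_2^n)$. *)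

theory Defs
  imports Complex_Main
begin

text \<open>An east-west face function f is stored so that f i j is its value at the face (i+1/2, j);
  a north-south face function g is stored so that g i j is its value at (i, j+1/2).\<close>

type_synonym grid = "int \<Rightarrow> int \<Rightarrow> real"

definition periodic :: "nat \<Rightarrow> grid \<Rightarrow> bool" where
  "periodic N \<nu> \<longleftrightarrow> (\<forall>i j a b :: int. \<nu> (i + a * int N) (j + b * int N) = \<nu> i j)"

definition Ax :: "grid \<Rightarrow> grid" where "Ax \<nu> = (\<lambda>i j. (\<nu> (i+1) j + \<nu> i j) / 2)"
definition Ay :: "grid \<Rightarrow> grid" where "Ay \<nu> = (\<lambda>i j. (\<nu> i (j+1) + \<nu> i j) / 2)"
definition Dx :: "real \<Rightarrow> grid \<Rightarrow> grid" where "Dx h \<nu> = (\<lambda>i j. (\<nu> (i+1) j - \<nu> i j) / h)"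
definition Dy :: "real \<Rightarrow> grid \<Rightarrow> grid" where "Dy h \<nu> = (\<lambda>i j. (\<nu> i (j+1) - \<nu> i j) / h)"
definition ax :: "grid \<Rightarrow> grid" where "ax f = (\<lambda>i j. (f i j + f (i-1) j) / 2)"
definition ay :: "grid \<Rightarrow> grid" where "ay f = (\<lambda>i j. (f i j + f i (j-1)) / 2)"
definition dx :: "real \<Rightarrow> grid \<Rightarrow> grid" where "dx h f = (\<lambda>i j. (f i j - f (i-1) j) / h)"
definition dy :: "real \<Rightarrow> grid \<Rightarrow> grid" where "dy h f = (\<lambda>i j. (f i j - f i (j-1)) / h)"

definition lap :: "real \<Rightarrow> grid \<Rightarrow> grid" where
  "lap h \<nu> = (\<lambda>i j. dx h (Dx h \<nu>) i j + dy h (Dy h \<nu>) i j)"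

text \<open>Discrete mean over Omega = (0,L)^2 with h = L/N.\<close>
definition gmean :: "real \<Rightarrow> nat \<Rightarrow> grid \<Rightarrow> real" where
  "gmean L N \<nu> = (1 / L\<^sup>2) * ((L / real N)\<^sup>2 * (\<Sum>i\<in>{1..int N}. \<Sum>j\<in>{1..int N}. \<nu> i j))"

definition inGibbs :: "nat \<Rightarrow> grid \<Rightarrow> grid \<Rightarrow> bool" where
  "inGibbs N \<phi>1 \<phi>2 \<longleftrightarrow> periodic N \<phi>1 \<and> periodic N \<phi>2 \<and>
     (\<forall>i j. 0 < \<phi>1 i j \<and> 0 < \<phi>2 i j \<and> \<phi>1 i j + \<phi>2 i j < 1)"

record model =
  M0 :: real  N0 :: real
  eps1 :: real  eps2 :: real  eps3 :: real
  chi12 :: real  chi13 :: real  chi23 :: real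
  mob1 :: real  mob2 :: real

definition valid_model :: "model \<Rightarrow> bool" where
  "valid_model P \<longleftrightarrow> M0 P > 0 \<and> N0 P > 0 \<and> eps1 P > 0 \<and> eps2 P > 0 \<and> eps3 P > 0 \<and>
     chi12 P > 0 \<and> chi13 P > 0 \<and> chi23 P > 0 \<and>
     4 * chi13 P * chi23 P - (chi12 P - chi13 P - chi23 P)\<^sup>2 > 0 \<and>
     mob1 P > 0 \<and> mob2 P > 0"

definition alpha :: "model \<Rightarrow> real" where
  "alpha P = pi * (sqrt (M0 P / pi) + N0 P / 2)\<^sup>2"
definition beta :: "model \<Rightarrow> real" where
  "beta P = 2 * sqrt (M0 P / pi) + N0 P"

definition dSa :: "model \<Rightarrow> real \<Rightarrow> real \<Rightarrow> real" where
  "dSa P a b = 1 / M0 P * ln (alpha P * a / M0 P) + 1 / M0 P - ln (1 - a - b) - 1"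
definition dSb :: "model \<Rightarrow> real \<Rightarrow> real \<Rightarrow> real" where
  "dSb P a b = 1 / N0 P * ln (beta P * b / N0 P) + 1 / N0 P - ln (1 - a - b) - 1"
definition dHa :: "model \<Rightarrow> real \<Rightarrow> real \<Rightarrow> real" where
  "dHa P a b = chi13 P - 2 * chi13 P * a + (chi12 P - chi13 P - chi23 P) * b"
definition dHb :: "model \<Rightarrow> real \<Rightarrow> real \<Rightarrow> real" where
  "dHb P a b = chi23 P - 2 * chi23 P * b + (chi12 P - chi13 P - chi23 P) * a"

definition kappa :: "real \<Rightarrow> real" where "kappa s = 1 / (36 * s)"
definition kappa' :: "real \<Rightarrow> real" where "kappa' s = - 1 / (36 * s\<^sup>2)"

definition Top :: "real \<Rightarrow> grid \<Rightarrow> grid" where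
  "Top h u = (\<lambda>i j.
      ax (\<lambda>i j. kappa' (Ax u i j) * (Dx h u i j)\<^sup>2) i j
    - 2 * dx h (\<lambda>i j. kappa (Ax u i j) * Dx h u i j) i j
    + ay (\<lambda>i j. kappa' (Ay u i j) * (Dy h u i j)\<^sup>2) i j
    - 2 * dy h (\<lambda>i j. kappa (Ay u i j) * Dy h u i j) i j)"

definition dG1 :: "model \<Rightarrow> real \<Rightarrow> grid \<Rightarrow> grid \<Rightarrow> grid" where
  "dG1 P h \<phi>1 \<phi>2 = (\<lambda>i j. dSa P (\<phi>1 i j) (\<phi>2 i j) + (eps1 P)\<^sup>2 * Top h \<phi>1 i j
      - (eps3 P)\<^sup>2 * Top h (\<lambda>i j. 1 - \<phi>1 i j - \<phi>2 i j) i j)"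
definition dG2 :: "model \<Rightarrow> real \<Rightarrow> grid \<Rightarrow> grid \<Rightarrow> grid" where
  "dG2 P h \<phi>1 \<phi>2 = (\<lambda>i j. dSb P (\<phi>1 i j) (\<phi>2 i j) + (eps2 P)\<^sup>2 * Top h \<phi>2 i j
      - (eps3 P)\<^sup>2 * Top h (\<lambda>i j. 1 - \<phi>1 i j - \<phi>2 i j) i j)"

text \<open>The BDF2 scheme at step n+1: given (p1o,p2o) = step n-1 and (p1c,p2c) = step n,
  (q1,q2) is the candidate for step n+1.\<close>
definition bdf2_step :: "model \<Rightarrow> real \<Rightarrow> real \<Rightarrow> real \<Rightarrow> real \<Rightarrow>
    grid \<Rightarrow> grid \<Rightarrow> grid \<Rightarrow> grid \<Rightarrow> grid \<Rightarrow> grid \<Rightarrow> bool" where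
  "bdf2_step P h dt A1 A2 p1o p2o p1c p2c q1 q2 \<longleftrightarrow>
    (let h1 = (\<lambda>i j. 2 * p1c i j - p1o i j);
         h2 = (\<lambda>i j. 2 * p2c i j - p2o i j);
         mu1 = (\<lambda>i j. dG1 P h q1 q2 i j + dHa P (h1 i j) (h2 i j)
                  - A1 * dt * lap h (\<lambda>i j. q1 i j - p1c i j) i j);
         mu2 = (\<lambda>i j. dG2 P h q1 q2 i j + dHb P (h1 i j) (h2 i j)
                  - A2 * dt * lap h (\<lambda>i j. q2 i j - p2c i j) i j)
     in (\<forall>i j. (3 * q1 i j - 4 * p1c i j + p1o i j) / (2 * dt) = mob1 P * lap h mu1 i j) \<and>
        (\<forall>i j. (3 * q2 i j - 4 * p2c i j + p2o i j) / (2 * dt) = mob2 P * lap h mu2 i j))"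

end

theory Submission
  imports Defs "HOL-Analysis.Analysis"
begin


section \<open>Periodicity\<close>

lemma per1D:
  fixes g :: "int \<Rightarrow> real"
  assumes "\<And>k. g (k + int N) = g k"
  shows "g (k + a * int N) = g k"
proof (induct a rule: int_induct[where k=0])
  case base then show ?case by simp
next
  case (step1 i)
  have "g (k + (i + 1) * int N) = g ((k + i * int N) + int N)" by (simp add: algebra_simps)
  also have "\<dots> = g (k + i * int N)" by (rule assms)
  finally show ?case using step1 by simp
next
  case (step2 i)
  have "g (k + i * int N) = g ((k + (i - 1) * int N) + int N)" by (simp add: algebra_simps)
  also have "\<dots> = g (k + (i - 1) * int N)" by (rule assms)
  finally show ?case using step2 by simp
qed

lemma periodic_iff:
  "periodic N f \<longleftrightarrow> (\<forall>i j. f (i + int N) j = f i j \<and> f i (j + int N) = f i j)"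
proof
  assume "periodic N f"
  then show "\<forall>i j. f (i + int N) j = f i j \<and> f i (j + int N) = f i j"
    unfolding periodic_def by (metis add.right_neutral mult_1 mult_zero_left)
next
  assume H: "\<forall>i j. f (i + int N) j = f i j \<and> f i (j + int N) = f i j"
  show "periodic N f" unfolding periodic_def
  proof (intro allI)
    fix i j a b :: int
    have "f (i + a * int N) (j + b * int N) = f i (j + b * int N)"
      using per1D[of "\<lambda>k. f k (j + b * int N)" N i a] H by simp
    also have "\<dots> = f i j"
      using per1D[of "\<lambda>k. f i k" N j b] H by simp
    finally show "f (i + a * int N) (j + b * int N) = f i j" .
  qed
qed

lemma perI: "(\<And>i j. f (i + int N) j = f i j) \<Longrightarrow> (\<And>i j. f i (j + int N) = f i j) \<Longrightarrow> periodic N f"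
  by (simp add: periodic_iff)

lemma per_x: "periodic N f \<Longrightarrow> f (i + int N) j = f i j"
  by (simp add: periodic_iff)
lemma per_y: "periodic N f \<Longrightarrow> f i (j + int N) = f i j"
  by (simp add: periodic_iff)
lemma per_xc: "periodic N f \<Longrightarrow> f (i + int N + c) j = f (i + c) j"
  using per_x[of N f "i+c" j] by (simp add: ac_simps)
lemma per_xm: "periodic N f \<Longrightarrow> f (i + int N - c) j = f (i - c) j"
proof -
  have e: "i + int N - c = (i-c) + int N" by simp
  assume "periodic N f" then show ?thesis using per_x[of N f "i-c" j] by (simp only: e)
qed
lemma per_yc: "periodic N f \<Longrightarrow> f i (j + int N + c) = f i (j + c)"
  using per_y[of N f i "j+c"] by (simp add: ac_simps)
lemma per_ym: "periodic N f \<Longrightarrow> f i (j + int N - c) = f i (j - c)"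
proof -
  have e: "j + int N - c = (j-c) + int N" by simp
  assume "periodic N f" then show ?thesis using per_y[of N f i "j-c"] by (simp only: e)
qed

lemmas per_simps = per_x per_y per_xc per_xm per_yc per_ym

lemma per_pt1: "periodic N f \<Longrightarrow> periodic N (\<lambda>i j. F (f i j))"
  by (simp add: periodic_iff)
lemma per_pt2: "periodic N f \<Longrightarrow> periodic N g \<Longrightarrow> periodic N (\<lambda>i j. F (f i j) (g i j))"
  by (simp add: periodic_iff)
lemma per_const: "periodic N (\<lambda>i j. c)"
  by (simp add: periodic_iff)

lemma per_Ax: "periodic N u \<Longrightarrow> periodic N (Ax u)"
  by (rule perI) (simp_all add: Ax_def per_simps)
lemma per_Ay: "periodic N u \<Longrightarrow> periodic N (Ay u)"
  by (rule perI) (simp_all add: Ay_def per_simps)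
lemma per_Dx: "periodic N u \<Longrightarrow> periodic N (Dx h u)"
  by (rule perI) (simp_all add: Dx_def per_simps)
lemma per_Dy: "periodic N u \<Longrightarrow> periodic N (Dy h u)"
  by (rule perI) (simp_all add: Dy_def per_simps)
lemma per_ax: "periodic N u \<Longrightarrow> periodic N (ax u)"
  by (rule perI) (simp_all add: ax_def per_simps)
lemma per_ay: "periodic N u \<Longrightarrow> periodic N (ay u)"
  by (rule perI) (simp_all add: ay_def per_simps)
lemma per_dx: "periodic N u \<Longrightarrow> periodic N (dx h u)"
  by (rule perI) (simp_all add: dx_def per_simps)
lemma per_dy: "periodic N u \<Longrightarrow> periodic N (dy h u)"
  by (rule perI) (simp_all add: dy_def per_simps)
lemma per_lap: "periodic N u \<Longrightarrow> periodic N (lap h u)"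
  unfolding lap_def
  by (rule per_pt2[where F="(+)"]) (simp_all add: per_dx per_dy per_Dx per_Dy)

lemma per_add: "periodic N f \<Longrightarrow> periodic N g \<Longrightarrow> periodic N (\<lambda>i j. f i j + g i j)"
  by (rule per_pt2)
lemma per_diff: "periodic N f \<Longrightarrow> periodic N g \<Longrightarrow> periodic N (\<lambda>i j. f i j - g i j)"
  by (rule per_pt2)
lemma per_mult: "periodic N f \<Longrightarrow> periodic N g \<Longrightarrow> periodic N (\<lambda>i j. f i j * g i j)"
  by (rule per_pt2)
lemma per_cmult: "periodic N f \<Longrightarrow> periodic N (\<lambda>i j. c * f i j)"
  by (rule per_pt1)

lemma per_Top: "periodic N u \<Longrightarrow> periodic N (Top h u)"
proof -
  assume u: "periodic N u"
  let ?F = "\<lambda>i j. kappa' (Ax u i j) * (Dx h u i j)\<^sup>2"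
  let ?G = "\<lambda>i j. kappa (Ax u i j) * Dx h u i j"
  let ?F' = "\<lambda>i j. kappa' (Ay u i j) * (Dy h u i j)\<^sup>2"
  let ?G' = "\<lambda>i j. kappa (Ay u i j) * Dy h u i j"
  have pF: "periodic N ?F" "periodic N ?G" "periodic N ?F'" "periodic N ?G'"
    by (rule perI; simp add: per_x per_y per_Ax per_Ay per_Dx per_Dy u)+
  have "periodic N (\<lambda>i j. ax ?F i j - 2 * dx h ?G i j + ay ?F' i j - 2 * dy h ?G' i j)"
    using pF by (intro per_add per_diff per_cmult per_ax per_ay per_dx per_dy)
  then show ?thesis unfolding Top_def .
qed

section \<open>Sums\<close>

definition S2 :: "nat \<Rightarrow> grid \<Rightarrow> real" where
  "S2 N f = (\<Sum>i\<in>{1..int N}. \<Sum>j\<in>{1..int N}. f i j)"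

lemma S2_add: "S2 N (\<lambda>i j. f i j + g i j) = S2 N f + S2 N g"
  by (simp add: S2_def sum.distrib)
lemma S2_diff: "S2 N (\<lambda>i j. f i j - g i j) = S2 N f - S2 N g"
  by (simp add: S2_def sum_subtractf)
lemma S2_cmult: "S2 N (\<lambda>i j. c * f i j) = c * S2 N f"
  by (simp add: S2_def sum_distrib_left)
lemma S2_multc: "S2 N (\<lambda>i j. f i j * c) = S2 N f * c"
  by (simp add: S2_def sum_distrib_right)
lemma S2_divc: "S2 N (\<lambda>i j. f i j / c) = S2 N f / c"
  by (simp add: S2_def sum_divide_distrib)
lemma S2_minus: "S2 N (\<lambda>i j. - f i j) = - S2 N f"
  by (simp add: S2_def sum_negf)
lemma S2_const: "S2 N (\<lambda>i j. c) = real N * real N * c"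
  by (simp add: S2_def)
lemma S2_cong: "(\<And>i j. 1 \<le> i \<Longrightarrow> i \<le> int N \<Longrightarrow> 1 \<le> j \<Longrightarrow> j \<le> int N \<Longrightarrow> f i j = g i j) \<Longrightarrow> S2 N f = S2 N g"
  unfolding S2_def by (intro sum.cong refl) auto
lemma S2_mono: "(\<And>i j. 1 \<le> i \<Longrightarrow> i \<le> int N \<Longrightarrow> 1 \<le> j \<Longrightarrow> j \<le> int N \<Longrightarrow> f i j \<le> g i j) \<Longrightarrow> S2 N f \<le> S2 N g"
  unfolding S2_def by (intro sum_mono) auto
lemma S2_nonneg: "(\<And>i j. 1 \<le> i \<Longrightarrow> i \<le> int N \<Longrightarrow> 1 \<le> j \<Longrightarrow> j \<le> int N \<Longrightarrow> 0 \<le> f i j) \<Longrightarrow> 0 \<le> S2 N f"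
  using S2_mono[of N "\<lambda>i j. 0" f] by (simp add: S2_def)

lemma sum_shift1:
  fixes g :: "int \<Rightarrow> real"
  assumes "\<And>k. g (k + int N) = g k"
  shows "(\<Sum>i\<in>{1..int N}. g (i+1)) = (\<Sum>i\<in>{1..int N}. g i)"
proof (cases "N = 0")
  case True then show ?thesis by simp
next
  case False
  have "(\<Sum>i\<in>{1..int N}. g (i+1)) = (\<Sum>i\<in>{2..int N + 1}. g i)"
    by (rule sum.reindex_bij_witness[of _ "\<lambda>i. i-1" "\<lambda>i. i+1"]) auto
  also have "{2..int N + 1} = insert (1 + int N) {2..int N}"
    using False by auto
  also have "(\<Sum>i\<in>insert (1 + int N) {2..int N}. g i) = g (1 + int N) + (\<Sum>i\<in>{2..int N}. g i)"
    by simp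
  also have "g (1 + int N) = g 1" using assms[of 1] by (simp add: ac_simps)
  also have "{1..int N} = insert 1 {2..int N}" using False by auto
  ultimately show ?thesis by simp
qed

lemma sum_shiftm1:
  fixes g :: "int \<Rightarrow> real"
  assumes "\<And>k. g (k + int N) = g k"
  shows "(\<Sum>i\<in>{1..int N}. g (i-1)) = (\<Sum>i\<in>{1..int N}. g i)"
proof -
  have "\<And>k. g (k + int N - 1) = g (k - 1)"
  proof -
    fix k :: int
    have "k + int N - 1 = (k - 1) + int N" by simp
    then show "g (k + int N - 1) = g (k - 1)" using assms[of "k-1"] by metis
  qed
  then show ?thesis using sum_shift1[of "\<lambda>k. g (k - 1)" N] by simp
qed

lemma S2_shift_xp: "periodic N f \<Longrightarrow> S2 N (\<lambda>i j. f (i+1) j) = S2 N f"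
  unfolding S2_def
  by (rule sum_shift1[of "\<lambda>i. \<Sum>j\<in>{1..int N}. f i j"]) (simp add: per_x)
lemma S2_shift_xm: "periodic N f \<Longrightarrow> S2 N (\<lambda>i j. f (i-1) j) = S2 N f"
  unfolding S2_def
  by (rule sum_shiftm1[of "\<lambda>i. \<Sum>j\<in>{1..int N}. f i j"]) (simp add: per_x)
lemma S2_shift_yp: "periodic N f \<Longrightarrow> S2 N (\<lambda>i j. f i (j+1)) = S2 N f"
  unfolding S2_def
  by (intro sum.cong refl sum_shift1) (simp add: per_y)
lemma S2_shift_ym: "periodic N f \<Longrightarrow> S2 N (\<lambda>i j. f i (j-1)) = S2 N f"
  unfolding S2_def
  by (intro sum.cong refl sum_shiftm1) (simp add: per_y)



lemma sbp_dx:
  assumes f: "periodic N f" and g: "periodic N g"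
  shows "S2 N (\<lambda>i j. f i j * dx h g i j) = - S2 N (\<lambda>i j. Dx h f i j * g i j)"
proof -
  have pm: "periodic N (\<lambda>i j. f (i+1) j * g i j)"
    by (rule perI) (simp_all add: per_x per_y per_xc f g)
  have sh: "S2 N (\<lambda>i j. f i j * g (i-1) j) = S2 N (\<lambda>i j. f (i+1) j * g i j)"
    using S2_shift_xm[OF pm] by simp
  have 1: "S2 N (\<lambda>i j. f i j * dx h g i j) = S2 N (\<lambda>i j. f i j * g i j - f i j * g (i-1) j) / h"
    unfolding S2_divc[symmetric] by (rule S2_cong) (simp add: dx_def right_diff_distrib diff_divide_distrib)
  have 2: "S2 N (\<lambda>i j. Dx h f i j * g i j) = S2 N (\<lambda>i j. f (i+1) j * g i j - f i j * g i j) / h"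
    unfolding S2_divc[symmetric] by (rule S2_cong) (simp add: Dx_def left_diff_distrib diff_divide_distrib)
  show ?thesis unfolding 1 2 S2_diff sh by (simp add: diff_divide_distrib)
qed

lemma sbp_dy:
  assumes f: "periodic N f" and g: "periodic N g"
  shows "S2 N (\<lambda>i j. f i j * dy h g i j) = - S2 N (\<lambda>i j. Dy h f i j * g i j)"
proof -
  have pm: "periodic N (\<lambda>i j. f i (j+1) * g i j)"
    by (rule perI) (simp_all add: per_x per_y per_yc f g)
  have sh: "S2 N (\<lambda>i j. f i j * g i (j-1)) = S2 N (\<lambda>i j. f i (j+1) * g i j)"
    using S2_shift_ym[OF pm] by simp
  have 1: "S2 N (\<lambda>i j. f i j * dy h g i j) = S2 N (\<lambda>i j. f i j * g i j - f i j * g i (j-1)) / h"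
    unfolding S2_divc[symmetric] by (rule S2_cong) (simp add: dy_def right_diff_distrib diff_divide_distrib)
  have 2: "S2 N (\<lambda>i j. Dy h f i j * g i j) = S2 N (\<lambda>i j. f i (j+1) * g i j - f i j * g i j) / h"
    unfolding S2_divc[symmetric] by (rule S2_cong) (simp add: Dy_def left_diff_distrib diff_divide_distrib)
  show ?thesis unfolding 1 2 S2_diff sh by (simp add: diff_divide_distrib)
qed

lemma sbp_ax:
  assumes f: "periodic N f" and g: "periodic N g"
  shows "S2 N (\<lambda>i j. f i j * ax g i j) = S2 N (\<lambda>i j. Ax f i j * g i j)"
proof -
  have pm: "periodic N (\<lambda>i j. f (i+1) j * g i j)"
    by (rule perI) (simp_all add: per_x per_y per_xc f g)
  have sh: "S2 N (\<lambda>i j. f i j * g (i-1) j) = S2 N (\<lambda>i j. f (i+1) j * g i j)"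
    using S2_shift_xm[OF pm] by simp
  have 1: "S2 N (\<lambda>i j. f i j * ax g i j) = S2 N (\<lambda>i j. f i j * g i j + f i j * g (i-1) j) / 2"
    unfolding S2_divc[symmetric] by (rule S2_cong) (simp add: ax_def distrib_left add_divide_distrib)
  have 2: "S2 N (\<lambda>i j. Ax f i j * g i j) = S2 N (\<lambda>i j. f (i+1) j * g i j + f i j * g i j) / 2"
    unfolding S2_divc[symmetric] by (rule S2_cong) (simp add: Ax_def distrib_right add_divide_distrib)
  show ?thesis unfolding 1 2 S2_add sh by simp
qed

lemma sbp_ay:
  assumes f: "periodic N f" and g: "periodic N g"
  shows "S2 N (\<lambda>i j. f i j * ay g i j) = S2 N (\<lambda>i j. Ay f i j * g i j)"
proof -
  have pm: "periodic N (\<lambda>i j. f i (j+1) * g i j)"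
    by (rule perI) (simp_all add: per_x per_y per_yc f g)
  have sh: "S2 N (\<lambda>i j. f i j * g i (j-1)) = S2 N (\<lambda>i j. f i (j+1) * g i j)"
    using S2_shift_ym[OF pm] by simp
  have 1: "S2 N (\<lambda>i j. f i j * ay g i j) = S2 N (\<lambda>i j. f i j * g i j + f i j * g i (j-1)) / 2"
    unfolding S2_divc[symmetric] by (rule S2_cong) (simp add: ay_def distrib_left add_divide_distrib)
  have 2: "S2 N (\<lambda>i j. Ay f i j * g i j) = S2 N (\<lambda>i j. f i (j+1) * g i j + f i j * g i j) / 2"
    unfolding S2_divc[symmetric] by (rule S2_cong) (simp add: Ay_def distrib_right add_divide_distrib)
  show ?thesis unfolding 1 2 S2_add sh by simp
qed

definition Gr :: "nat \<Rightarrow> real \<Rightarrow> grid \<Rightarrow> grid \<Rightarrow> real" where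
  "Gr N h f g = S2 N (\<lambda>i j. Dx h f i j * Dx h g i j + Dy h f i j * Dy h g i j)"

lemma sbp_lap:
  assumes f: "periodic N f" and g: "periodic N g"
  shows "S2 N (\<lambda>i j. f i j * lap h g i j) = - Gr N h f g"
proof -
  have "S2 N (\<lambda>i j. f i j * lap h g i j) =
     S2 N (\<lambda>i j. f i j * dx h (Dx h g) i j + f i j * dy h (Dy h g) i j)"
    by (rule S2_cong) (simp add: lap_def distrib_left)
  also have "\<dots> = S2 N (\<lambda>i j. f i j * dx h (Dx h g) i j) + S2 N (\<lambda>i j. f i j * dy h (Dy h g) i j)"
    by (rule S2_add)
  also have "\<dots> = - S2 N (\<lambda>i j. Dx h f i j * Dx h g i j) - S2 N (\<lambda>i j. Dy h f i j * Dy h g i j)"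
    using sbp_dx[OF f per_Dx[OF g]] sbp_dy[OF f per_Dy[OF g]] by simp
  also have "\<dots> = - Gr N h f g"
    unfolding Gr_def S2_add by simp
  finally show ?thesis .
qed

lemma Gr_sym: "Gr N h f g = Gr N h g f"
  unfolding Gr_def by (simp add: mult.commute)

lemma sbp_lap_sym:
  assumes "periodic N f" "periodic N g"
  shows "S2 N (\<lambda>i j. f i j * lap h g i j) = S2 N (\<lambda>i j. lap h f i j * g i j)"
proof -
  have "S2 N (\<lambda>i j. lap h f i j * g i j) = S2 N (\<lambda>i j. g i j * lap h f i j)"
    by (simp add: mult.commute)
  then show ?thesis using sbp_lap[OF assms] sbp_lap[OF assms(2,1)] Gr_sym[of N h f g] by simp
qed

lemma S2_lap: "periodic N g \<Longrightarrow> S2 N (lap h g) = 0"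
proof -
  assume g: "periodic N g"
  have "S2 N (\<lambda>i j. 1 * lap h g i j) = - Gr N h (\<lambda>i j. 1) g"
    by (rule sbp_lap[OF per_const g])
  moreover have "Gr N h (\<lambda>i j. 1) g = 0" by (simp add: Gr_def Dx_def Dy_def S2_def)
  ultimately show ?thesis by simp
qed

lemma Gr_nonneg: "0 \<le> Gr N h f f"
  unfolding Gr_def by (rule S2_nonneg) simp

lemma sbp_Top:
  assumes u: "periodic N u" and d: "periodic N d"
  shows "S2 N (\<lambda>i j. Top h u i j * d i j) = S2 N (\<lambda>i j.
      kappa' (Ax u i j) * (Dx h u i j)\<^sup>2 * Ax d i j + 2 * kappa (Ax u i j) * Dx h u i j * Dx h d i j
    + kappa' (Ay u i j) * (Dy h u i j)\<^sup>2 * Ay d i j + 2 * kappa (Ay u i j) * Dy h u i j * Dy h d i j)"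
proof -
  let ?F = "\<lambda>i j. kappa' (Ax u i j) * (Dx h u i j)\<^sup>2"
  let ?G = "\<lambda>i j. kappa (Ax u i j) * Dx h u i j"
  let ?F' = "\<lambda>i j. kappa' (Ay u i j) * (Dy h u i j)\<^sup>2"
  let ?G' = "\<lambda>i j. kappa (Ay u i j) * Dy h u i j"
  have pF: "periodic N ?F" "periodic N ?G" "periodic N ?F'" "periodic N ?G'"
    by (rule perI; simp add: per_x per_y per_Ax per_Ay per_Dx per_Dy u)+
  have "S2 N (\<lambda>i j. Top h u i j * d i j) = S2 N (\<lambda>i j.
      d i j * ax ?F i j - 2 * (d i j * dx h ?G i j) + d i j * ay ?F' i j - 2 * (d i j * dy h ?G' i j))"
    by (rule S2_cong) (simp add: Top_def algebra_simps)
  also have "\<dots> = S2 N (\<lambda>i j. d i j * ax ?F i j) - 2 * S2 N (\<lambda>i j. d i j * dx h ?G i j)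
    + S2 N (\<lambda>i j. d i j * ay ?F' i j) - 2 * S2 N (\<lambda>i j. d i j * dy h ?G' i j)"
    by (simp only: S2_add S2_diff S2_cmult)
  also have "\<dots> = S2 N (\<lambda>i j. Ax d i j * ?F i j) + 2 * S2 N (\<lambda>i j. Dx h d i j * ?G i j)
    + S2 N (\<lambda>i j. Ay d i j * ?F' i j) + 2 * S2 N (\<lambda>i j. Dy h d i j * ?G' i j)"
    using sbp_ax[OF d pF(1)] sbp_dx[OF d pF(2)] sbp_ay[OF d pF(3)] sbp_dy[OF d pF(4)] by simp
  also have "\<dots> = S2 N (\<lambda>i j. Ax d i j * ?F i j + 2 * (Dx h d i j * ?G i j)
    + Ay d i j * ?F' i j + 2 * (Dy h d i j * ?G' i j))"
    by (simp only: S2_add S2_cmult)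
  also have "\<dots> = S2 N (\<lambda>i j.
      kappa' (Ax u i j) * (Dx h u i j)\<^sup>2 * Ax d i j + 2 * kappa (Ax u i j) * Dx h u i j * Dx h d i j
    + kappa' (Ay u i j) * (Dy h u i j)\<^sup>2 * Ay d i j + 2 * kappa (Ay u i j) * Dy h u i j * Dy h d i j)"
    by (rule S2_cong) (simp add: algebra_simps)
  finally show ?thesis .
qed


definition rp :: "nat \<Rightarrow> int \<Rightarrow> int" where "rp N x = (x - 1) mod int N + 1"

lemma rp_bounds: "N \<ge> 1 \<Longrightarrow> 1 \<le> rp N x \<and> rp N x \<le> int N"
proof -
  assume "N \<ge> 1"
  then have p: "0 < int N" by simp
  have "0 \<le> (x-1) mod int N" "(x-1) mod int N < int N" using p by simp_all
  then show ?thesis unfolding rp_def by simp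
qed

lemma rp_id: "1 \<le> x \<Longrightarrow> x \<le> int N \<Longrightarrow> rp N x = x"
proof -
  assume "1 \<le> x" "x \<le> int N"
  then have "(x - 1) mod int N = x - 1" by (intro mod_pos_pos_trivial) simp_all
  then show ?thesis unfolding rp_def by simp
qed

lemma rp_eq: "rp N x = x + (- ((x - 1) div int N)) * int N"
  unfolding rp_def using div_mult_mod_eq[of "x-1" "int N"] by linarith

lemma per_rp: "periodic N f \<Longrightarrow> f (rp N i) (rp N j) = f i j"
  unfolding periodic_def rp_eq by blast

lemma rp_shift: "rp N (i + int N) = rp N i"
proof -
  have "i + int N - 1 = (i-1) + int N" by simp
  then show ?thesis by (simp only: rp_def mod_add_self2)
qed

definition ind :: "nat \<Rightarrow> int \<Rightarrow> int \<Rightarrow> grid" where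
  "ind N x y = (\<lambda>i j. if rp N i = rp N x \<and> rp N j = rp N y then 1 else 0)"

lemma per_ind: "periodic N (ind N x y)"
  by (rule perI) (simp_all add: ind_def rp_shift)

lemma S2_ind:
  assumes "N \<ge> 1" "periodic N F"
  shows "S2 N (\<lambda>i j. F i j * ind N x y i j) = F x y"
proof -
  have "S2 N (\<lambda>i j. F i j * ind N x y i j) = S2 N (\<lambda>i j. if i = rp N x then (if j = rp N y then F i j else 0) else 0)"
    by (rule S2_cong) (auto simp: ind_def rp_id)
  also have "\<dots> = F (rp N x) (rp N y)"
  proof -
    have inner: "(\<Sum>j\<in>{1..int N}. if i = rp N x then (if j = rp N y then F i j else 0) else 0)
       = (if i = rp N x then F i (rp N y) else 0)" for i
      using rp_bounds[OF assms(1), of y] by (cases "i = rp N x") simp_all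
    show ?thesis unfolding S2_def inner using rp_bounds[OF assms(1), of x] by simp
  qed
  also have "\<dots> = F x y" by (rule per_rp[OF assms(2)])
  finally show ?thesis .
qed

lemma S2_ind_left:
  assumes "N \<ge> 1" "periodic N F"
  shows "S2 N (\<lambda>i j. ind N x y i j * F i j) = F x y"
  using S2_ind[OF assms, of x y] by (simp add: mult.commute)

lemma S2_term_le:
  assumes "\<And>i j. 0 \<le> f i j" "1 \<le> i" "i \<le> int N" "1 \<le> j" "j \<le> int N"
  shows "f i j \<le> S2 N f"
proof -
  have "f i j \<le> (\<Sum>j\<in>{1..int N}. f i j)"
    by (rule member_le_sum) (use assms in auto)
  also have "\<dots> \<le> S2 N f" unfolding S2_def
    by (rule member_le_sum[where f="\<lambda>i. \<Sum>j\<in>{1..int N}. f i j"]) (use assms in \<open>auto intro: sum_nonneg\<close>)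
  finally show ?thesis .
qed

lemma per_bounded:
  assumes "N \<ge> 1" "periodic N f"
  shows "\<exists>M. \<forall>i j. \<bar>f i j\<bar> \<le> M"
proof (intro exI allI)
  fix i j
  have "\<bar>f i j\<bar> = \<bar>f (rp N i) (rp N j)\<bar>" by (simp add: per_rp[OF assms(2)])
  also have "\<dots> \<le> S2 N (\<lambda>i j. \<bar>f i j\<bar>)"
    using rp_bounds[OF assms(1)] by (intro S2_term_le[where f="\<lambda>i j. \<bar>f i j\<bar>"]) auto
  finally show "\<bar>f i j\<bar> \<le> S2 N (\<lambda>i j. \<bar>f i j\<bar>)" .
qed

lemma per_pos_lb:
  assumes "N \<ge> 1" "periodic N f" "\<And>i j. 0 < f i j"
  shows "\<exists>e>0. \<forall>i j. e \<le> f i j"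
proof -
  let ?S = "S2 N (\<lambda>i j. 1 / f i j)"
  have le: "1 / f i j \<le> ?S" for i j
  proof -
    have "1 / f i j = 1 / f (rp N i) (rp N j)" by (simp add: per_rp[OF assms(2)])
    also have "\<dots> \<le> ?S"
      using rp_bounds[OF assms(1)] assms(3) by (intro S2_term_le[where f="\<lambda>i j. 1 / f i j"]) (auto intro: less_imp_le)
    finally show ?thesis .
  qed
  have Spos: "0 < ?S" using le[of 1 1] assms(3)[of 1 1] by (smt (verit) divide_pos_pos)
  show ?thesis
  proof (intro exI[of _ "1 / ?S"] conjI allI)
    show "0 < 1 / ?S" using Spos by simp
    fix i j
    show "1 / ?S \<le> f i j" using le[of i j] assms(3)[of i j] Spos
      by (simp add: divide_simps) (simp add: mult.commute)
  qed
qed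

lemma S2_less:
  assumes "N \<ge> 1" "\<And>i j. 1 \<le> i \<Longrightarrow> i \<le> int N \<Longrightarrow> 1 \<le> j \<Longrightarrow> j \<le> int N \<Longrightarrow> f i j < g i j"
  shows "S2 N f < S2 N g"
  unfolding S2_def
  using assms by (intro sum_strict_mono) auto

lemma exists_ge_mean:
  assumes "N \<ge> 1"
  shows "\<exists>i j. 1 \<le> i \<and> i \<le> int N \<and> 1 \<le> j \<and> j \<le> int N \<and> S2 N f / (real N * real N) \<le> f i j"
proof (rule ccontr)
  let ?m = "S2 N f / (real N * real N)"
  assume "\<not> ?thesis"
  then have "S2 N f < S2 N (\<lambda>i j. ?m)" using assms by (intro S2_less) force+
  also have "\<dots> = S2 N f" using assms by (simp add: S2_const)
  finally show False by simp
qed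


lemma Gr_term:
  assumes "1 \<le> k" "k \<le> int N" "1 \<le> l" "l \<le> int N"
  shows "(Dx h w k l)\<^sup>2 \<le> Gr N h w w" "(Dy h w k l)\<^sup>2 \<le> Gr N h w w"
proof -
  have "(Dx h w k l)\<^sup>2 + (Dy h w k l)\<^sup>2 \<le> Gr N h w w"
    unfolding Gr_def power2_eq_square
    by (rule S2_term_le[where f="\<lambda>i j. Dx h w i j * Dx h w i j + Dy h w i j * Dy h w i j"]) (use assms in auto)
  then show "(Dx h w k l)\<^sup>2 \<le> Gr N h w w" "(Dy h w k l)\<^sup>2 \<le> Gr N h w w"
    by (smt (verit) zero_le_power2)+
qed

lemma abs_le_sqrtI: "x\<^sup>2 \<le> y \<Longrightarrow> \<bar>x\<bar> \<le> sqrt y"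
  using real_sqrt_le_mono by fastforce

lemma diffx_le:
  assumes "h > 0" "1 \<le> k" "k \<le> int N" "1 \<le> l" "l \<le> int N"
  shows "\<bar>w (k+1) l - w k l\<bar> \<le> h * sqrt (Gr N h w w)"
proof -
  have "\<bar>Dx h w k l\<bar> \<le> sqrt (Gr N h w w)" using Gr_term(1)[OF assms(2-5)] by (rule abs_le_sqrtI)
  moreover have "\<bar>w (k+1) l - w k l\<bar> = h * \<bar>Dx h w k l\<bar>" using assms(1) by (simp add: Dx_def abs_div)
  ultimately show ?thesis using assms(1) by simp
qed

lemma diffy_le:
  assumes "h > 0" "1 \<le> k" "k \<le> int N" "1 \<le> l" "l \<le> int N"
  shows "\<bar>w k (l+1) - w k l\<bar> \<le> h * sqrt (Gr N h w w)"
proof -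
  have "\<bar>Dy h w k l\<bar> \<le> sqrt (Gr N h w w)" using Gr_term(2)[OF assms(2-5)] by (rule abs_le_sqrtI)
  moreover have "\<bar>w k (l+1) - w k l\<bar> = h * \<bar>Dy h w k l\<bar>" using assms(1) by (simp add: Dy_def abs_div)
  ultimately show ?thesis using assms(1) by simp
qed

lemma path_x:
  assumes "h > 0" "1 \<le> l" "l \<le> int N" "1 \<le> i"
  shows "i \<le> int N \<Longrightarrow> \<bar>w i l - w 1 l\<bar> \<le> (i - 1) * (h * sqrt (Gr N h w w))"
  using assms(4)
proof (induct i rule: int_ge_induct)
  case base then show ?case by simp
next
  case (step i)
  have "\<bar>w (i+1) l - w 1 l\<bar> \<le> \<bar>w (i+1) l - w i l\<bar> + \<bar>w i l - w 1 l\<bar>" by simp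
  also have "\<dots> \<le> h * sqrt (Gr N h w w) + (i - 1) * (h * sqrt (Gr N h w w))"
    using diffx_le[OF assms(1) step(1) _ assms(2,3), of w] step by simp
  finally show ?case by (simp add: algebra_simps)
qed

lemma path_y:
  assumes "h > 0" "1 \<le> k" "k \<le> int N" "1 \<le> j"
  shows "j \<le> int N \<Longrightarrow> \<bar>w k j - w k 1\<bar> \<le> (j - 1) * (h * sqrt (Gr N h w w))"
  using assms(4)
proof (induct j rule: int_ge_induct)
  case base then show ?case by simp
next
  case (step j)
  have "\<bar>w k (j+1) - w k 1\<bar> \<le> \<bar>w k (j+1) - w k j\<bar> + \<bar>w k j - w k 1\<bar>" by simp
  also have "\<dots> \<le> h * sqrt (Gr N h w w) + (j - 1) * (h * sqrt (Gr N h w w))"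
    using diffy_le[OF assms(1,2,3) step(1), of w] step by simp
  finally show ?case by (simp add: algebra_simps)
qed

lemma osc_bound:
  assumes "h > 0" "N \<ge> 1" "periodic N w"
  shows "\<bar>w i j - w 1 1\<bar> \<le> 2 * real N * (h * sqrt (Gr N h w w))"
proof -
  let ?a = "rp N i" and ?b = "rp N j" and ?s = "h * sqrt (Gr N h w w)"
  have s0: "0 \<le> ?s" using assms(1) Gr_nonneg[where N=N and h=h and f=w] by simp
  have a: "1 \<le> ?a" "?a \<le> int N" and b: "1 \<le> ?b" "?b \<le> int N" using rp_bounds[OF assms(2)] by auto
  have "\<bar>w ?a ?b - w 1 1\<bar> \<le> \<bar>w ?a ?b - w ?a 1\<bar> + \<bar>w ?a 1 - w 1 1\<bar>" by simp
  also have "\<dots> \<le> (?b - 1) * ?s + (?a - 1) * ?s"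
    using path_y[of h ?a N ?b w] path_x[of h 1 N ?a w] a b assms(1,2)
    by (intro add_mono) simp_all
  also have "\<dots> \<le> real N * ?s + real N * ?s"
    using a b s0 by (intro add_mono mult_right_mono) simp_all
  finally show ?thesis using per_rp[OF assms(3), of i j] by (simp add: algebra_simps)
qed

lemma lap_box:
  assumes "h > 0" "N \<ge> 1" "periodic N w" "w 1 1 = 0" "M \<ge> 0"
    and "\<And>i j. \<bar>lap h w i j\<bar> \<le> M"
  shows "\<bar>w i j\<bar> \<le> 4 * real N ^ 4 * h\<^sup>2 * M"
proof -
  define X where "X = sqrt (Gr N h w w)"
  have X0: "0 \<le> X" unfolding X_def using Gr_nonneg[where N=N and h=h and f=w] by simp
  have XX: "X * X = Gr N h w w" unfolding X_def using Gr_nonneg[where N=N and h=h and f=w] by simp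
  have wb: "\<bar>w i j\<bar> \<le> 2 * real N * (h * X)" for i j
    using osc_bound[OF assms(1-3), of i j] assms(4) unfolding X_def by simp
  have "Gr N h w w = - S2 N (\<lambda>i j. w i j * lap h w i j)"
    using sbp_lap[OF assms(3) assms(3)] by simp
  also have "\<dots> \<le> S2 N (\<lambda>i j. (2 * real N * (h * X)) * M)"
    unfolding S2_minus[symmetric]
  proof (rule S2_mono)
    fix i j
    have "- (w i j * lap h w i j) \<le> \<bar>w i j\<bar> * \<bar>lap h w i j\<bar>" by (simp add: abs_mult[symmetric])
    also have "\<dots> \<le> (2 * real N * (h * X)) * M"
      using wb[of i j] assms(6)[of i j] X0 assms(1) by (intro mult_mono) simp_all
    finally show "- (w i j * lap h w i j) \<le> (2 * real N * (h * X)) * M" .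
  qed
  also have "\<dots> = real N * real N * (2 * real N * (h * X) * M)" by (simp add: S2_const)
  finally have "X * X \<le> (2 * real N ^ 3 * h * M) * X" using XX by (simp add: power3_eq_cube algebra_simps)
  then have Xb: "X \<le> 2 * real N ^ 3 * h * M"
    using X0 by (cases "X = 0") (use assms in \<open>simp_all add: mult_le_cancel_right\<close>)
  have "\<bar>w i j\<bar> \<le> 2 * real N * (h * (2 * real N ^ 3 * h * M))"
    using wb[of i j] Xb assms(1,2) by (smt (verit) mult_left_mono of_nat_0_le_iff)
  also have "\<dots> = 4 * real N ^ 4 * h\<^sup>2 * M" by (simp add: power2_eq_square power3_eq_cube power4_eq_xxxx)
  finally show ?thesis .
qed


lemma cont_eval [continuous_intros]: "continuous_on S (\<lambda>w::grid. w i j)"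
proof -
  have "continuous_on UNIV (\<lambda>w::grid. w i)" by simp
  moreover have "continuous_on UNIV (\<lambda>g::int\<Rightarrow>real. g j)" by simp
  ultimately have "continuous_on UNIV ((\<lambda>g::int\<Rightarrow>real. g j) o (\<lambda>w::grid. w i))"
    by (meson continuous_on_compose continuous_on_subset top_greatest)
  then show ?thesis by (simp add: o_def) (metis continuous_on_subset subset_UNIV)
qed

lemma compact_PiE_UNIV:
  fixes K :: "'b::topological_space set"
  assumes "compact K" shows "compact (PiE (UNIV::'a set) (\<lambda>_. K))"
proof -
  have "compactin (product_topology (\<lambda>_. euclidean) UNIV) (PiE (UNIV::'a set) (\<lambda>_. K))"
    using assms by (simp add: compactin_PiE)
  then show ?thesis by (simp add: euclidean_product_topology)
qed

lemma compact_box: "compact {w::grid. \<forall>i j. \<bar>w i j\<bar> \<le> R}"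
proof -
  have "{w::grid. \<forall>i j. \<bar>w i j\<bar> \<le> R} = PiE UNIV (\<lambda>_. PiE UNIV (\<lambda>_. {-R..R}))"
    by (auto simp: PiE_def Pi_def abs_le_iff minus_le_iff)
  moreover have "compact (PiE (UNIV::int set) (\<lambda>_. PiE (UNIV::int set) (\<lambda>_. {-R..R::real})))"
    by (intro compact_PiE_UNIV compact_Icc)
  ultimately show ?thesis by simp
qed

lemma closed_periodic: "closed {w::grid. periodic N w}"
  unfolding periodic_def
  by (intro closed_Collect_all closed_Collect_eq cont_eval)

lemma closed_pt_eq: "closed {w::grid. w a b = c}"
  by (intro closed_Collect_eq cont_eval continuous_intros)

lemma quad_zero:
  fixes a b :: real
  assumes "b \<ge> 0" "\<And>s. 0 \<le> a * s + b * s\<^sup>2"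
  shows "a = 0"
proof -
  define c where "c = b + 1"
  have c: "c > 0" using assms(1) unfolding c_def by simp
  let ?s = "- a / c"
  have cs: "c * ?s = - a" using c by simp
  have gen: "\<And>s. c\<^sup>2 * (a * s + b * s\<^sup>2) = a * c * (c * s) + b * (c * s)\<^sup>2"
    by (simp add: algebra_simps power2_eq_square)
  have "c\<^sup>2 * (a * ?s + b * ?s\<^sup>2) = a * c * (c * ?s) + b * (c * ?s)\<^sup>2"
    by (rule gen)
  also have "\<dots> = - a\<^sup>2" unfolding cs by (simp add: c_def algebra_simps power2_eq_square)
  moreover have "0 \<le> c\<^sup>2 * (a * ?s + b * ?s\<^sup>2)" using assms(2)[of ?s] by simp
  ultimately have "- a\<^sup>2 \<ge> 0" by simp
  then show ?thesis by simp
qed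

lemma Dx_lin: "Dx h (\<lambda>i j. a i j + s * b i j) i j = Dx h a i j + s * Dx h b i j"
  by (cases "h = 0") (simp_all add: Dx_def field_simps)
lemma Dy_lin: "Dy h (\<lambda>i j. a i j + s * b i j) i j = Dy h a i j + s * Dy h b i j"
  by (cases "h = 0") (simp_all add: Dy_def field_simps)
lemma lap_lin: "lap h (\<lambda>i j. a i j + s * b i j) i j = lap h a i j + s * lap h b i j"
  by (cases "h = 0") (simp_all add: lap_def dx_def dy_def Dx_def Dy_def field_simps)

lemma Gr_quad:
  "Gr N h (\<lambda>i j. a i j + s * b i j) (\<lambda>i j. a i j + s * b i j) = Gr N h a a + 2 * s * Gr N h a b + s\<^sup>2 * Gr N h b b"
proof -
  have "Gr N h (\<lambda>i j. a i j + s * b i j) (\<lambda>i j. a i j + s * b i j) =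
    S2 N (\<lambda>i j. (Dx h a i j * Dx h a i j + Dy h a i j * Dy h a i j)
      + (2 * s) * (Dx h a i j * Dx h b i j + Dy h a i j * Dy h b i j)
      + s\<^sup>2 * (Dx h b i j * Dx h b i j + Dy h b i j * Dy h b i j))"
    unfolding Gr_def by (rule S2_cong) (simp add: Dx_lin Dy_lin algebra_simps power2_eq_square)
  also have "\<dots> = Gr N h a a + 2 * s * Gr N h a b + s\<^sup>2 * Gr N h b b"
    unfolding Gr_def by (simp only: S2_add S2_cmult)
  finally show ?thesis .
qed

lemma Gr_const_shift: "Gr N h (\<lambda>i j. a i j - c) (\<lambda>i j. a i j - c) = Gr N h a a"
  unfolding Gr_def Dx_def Dy_def by simp

lemma Gr_cont: "h \<noteq> 0 \<Longrightarrow> continuous_on S (\<lambda>w. Gr N h w w)"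
  unfolding Gr_def S2_def Dx_def Dy_def by (intro continuous_intros) auto



lemma poisson:
  assumes h: "h > 0" and N: "N \<ge> 1" and f: "periodic N f" and f0: "S2 N f = 0"
  shows "\<exists>\<psi>. periodic N \<psi> \<and> (\<forall>i j. lap h \<psi> i j = f i j)"
proof -
  define E where "E = (\<lambda>\<psi>. Gr N h \<psi> \<psi> / 2 + S2 N (\<lambda>i j. f i j * \<psi> i j))"
  define F1 where "F1 = S2 N (\<lambda>i j. \<bar>f i j\<bar>)"
  have F10: "0 \<le> F1" unfolding F1_def by (rule S2_nonneg) simp
  define R0 where "R0 = 4 * real N * h * F1"
  define R where "R = 2 * real N * h * R0 + 1"
  have R0: "0 \<le> R0" unfolding R0_def using F10 h by simp
  have R00: "0 \<le> R" unfolding R_def using R0 h by simp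
  have lowb: "E \<psi> \<ge> sqrt (Gr N h \<psi> \<psi>) * (sqrt (Gr N h \<psi> \<psi>) / 2 - 2 * real N * h * F1)"
    if p: "periodic N \<psi>" and n: "\<psi> 1 1 = 0" for \<psi>
  proof -
    let ?X = "sqrt (Gr N h \<psi> \<psi>)"
    have XX: "?X * ?X = Gr N h \<psi> \<psi>" using Gr_nonneg[where N=N and h=h and f=\<psi>] by simp
    have wb: "\<bar>\<psi> i j\<bar> \<le> 2 * real N * (h * ?X)" for i j
      using osc_bound[OF h N p, of i j] n by simp
    have "- S2 N (\<lambda>i j. f i j * \<psi> i j) \<le> S2 N (\<lambda>i j. \<bar>f i j\<bar> * (2 * real N * (h * ?X)))"
      unfolding S2_minus[symmetric]
    proof (rule S2_mono)
      fix i j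
      have "- (f i j * \<psi> i j) \<le> \<bar>f i j\<bar> * \<bar>\<psi> i j\<bar>" by (simp add: abs_mult[symmetric])
      also have "\<dots> \<le> \<bar>f i j\<bar> * (2 * real N * (h * ?X))"
        using wb[of i j] by (intro mult_left_mono) simp_all
      finally show "- (f i j * \<psi> i j) \<le> \<bar>f i j\<bar> * (2 * real N * (h * ?X))" .
    qed
    also have "\<dots> = F1 * (2 * real N * (h * ?X))" unfolding F1_def by (rule S2_multc)
    finally have c1: "- S2 N (\<lambda>i j. f i j * \<psi> i j) \<le> F1 * (2 * real N * (h * ?X))" .
    have c2: "?X * (?X / 2 - 2 * real N * h * F1) = (?X * ?X) / 2 - F1 * (2 * real N * (h * ?X))"
      by (simp add: algebra_simps)
    show ?thesis unfolding E_def using XX c1 c2 by linarith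
  qed
  define K where "K = {\<psi>. periodic N \<psi>} \<inter> {\<psi>. \<psi> 1 1 = 0} \<inter> {\<psi>::grid. \<forall>i j. \<bar>\<psi> i j\<bar> \<le> R}"
  have cK: "compact K" unfolding K_def
    by (intro closed_Int_compact closed_Int closed_periodic closed_pt_eq compact_box)
  have K0: "(\<lambda>i j. 0) \<in> K" unfolding K_def using R00 by (simp add: per_const)
  have cE: "continuous_on K E" unfolding E_def S2_def
    using h by (intro continuous_intros Gr_cont) auto
  obtain \<psi> where \<psi>K: "\<psi> \<in> K" and \<psi>min: "\<And>\<phi>. \<phi> \<in> K \<Longrightarrow> E \<psi> \<le> E \<phi>"
    using continuous_attains_inf[OF cK _ cE] K0 by blast
  have E0: "E (\<lambda>i j. 0) = 0" unfolding E_def Gr_def Dx_def Dy_def S2_def by simp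
  have p\<psi>: "periodic N \<psi>" using \<psi>K unfolding K_def by simp
  have gmin: "E \<psi> \<le> E \<phi>" if p: "periodic N \<phi>" for \<phi>
  proof -
    define \<phi>' where "\<phi>' = (\<lambda>i j. \<phi> i j - \<phi> 1 1)"
    have p': "periodic N \<phi>'" unfolding \<phi>'_def using p by (intro per_diff per_const)
    have n': "\<phi>' 1 1 = 0" unfolding \<phi>'_def by simp
    have "S2 N (\<lambda>i j. f i j * \<phi>' i j) = S2 N (\<lambda>i j. f i j * \<phi> i j) - S2 N f * \<phi> 1 1"
      unfolding \<phi>'_def by (simp add: right_diff_distrib S2_diff S2_multc)
    then have Eeq: "E \<phi>' = E \<phi>" unfolding E_def \<phi>'_def using f0 Gr_const_shift by simp
    show ?thesis
    proof (cases "\<forall>i j. \<bar>\<phi>' i j\<bar> \<le> R")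
      case True
      then have "\<phi>' \<in> K" unfolding K_def using p' n' by simp
      then show ?thesis using \<psi>min Eeq by fastforce
    next
      case False
      then obtain i j where big: "\<bar>\<phi>' i j\<bar> > R" by (meson not_le)
      let ?X = "sqrt (Gr N h \<phi>' \<phi>')"
      have X0: "0 \<le> ?X" using Gr_nonneg[where N=N and h=h and f=\<phi>'] by simp
      have "\<bar>\<phi>' i j\<bar> \<le> 2 * real N * (h * ?X)" using osc_bound[OF h N p', of i j] n' by simp
      then have "2 * real N * h * R0 < 2 * real N * h * ?X" using big unfolding R_def by simp
      then have XR: "R0 < ?X"
      proof -
        have "0 < 2 * real N * h" using h N by simp
        then show ?thesis using \<open>2 * real N * h * R0 < 2 * real N * h * ?X\<close>
          by (simp add: mult_less_cancel_left_pos)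
      qed
      have "0 < ?X" using XR R0 by linarith
      moreover have "0 < ?X / 2 - 2 * real N * h * F1" using XR unfolding R0_def by linarith
      ultimately have "0 < ?X * (?X / 2 - 2 * real N * h * F1)" by (rule mult_pos_pos)
      also have "\<dots> \<le> E \<phi>'" by (rule lowb[OF p' n'])
      finally have "0 < E \<phi>'" .
      moreover have "E \<psi> \<le> 0" using \<psi>min[OF K0] E0 by simp
      ultimately show ?thesis using Eeq by simp
    qed
  qed
  have el: "S2 N (\<lambda>i j. v i j * (f i j - lap h \<psi> i j)) = 0" if pv: "periodic N v" for v
  proof -
    let ?a = "Gr N h \<psi> v + S2 N (\<lambda>i j. f i j * v i j)"
    have "0 \<le> ?a * s + (Gr N h v v / 2) * s\<^sup>2" for s
    proof -
      have "periodic N (\<lambda>i j. \<psi> i j + s * v i j)" using p\<psi> pv by (intro per_add per_cmult)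
      then have "E \<psi> \<le> E (\<lambda>i j. \<psi> i j + s * v i j)" by (rule gmin)
      moreover have S: "S2 N (\<lambda>i j. f i j * (\<psi> i j + s * v i j)) = S2 N (\<lambda>i j. f i j * \<psi> i j) + s * S2 N (\<lambda>i j. f i j * v i j)"
      proof -
        have "S2 N (\<lambda>i j. f i j * (\<psi> i j + s * v i j)) = S2 N (\<lambda>i j. f i j * \<psi> i j + s * (f i j * v i j))"
          by (rule S2_cong) (simp add: algebra_simps)
        then show ?thesis by (simp only: S2_add S2_cmult)
      qed
      moreover have "E (\<lambda>i j. \<psi> i j + s * v i j) = E \<psi> + (?a * s + (Gr N h v v / 2) * s\<^sup>2)"
        unfolding E_def Gr_quad S by (simp add: field_simps)
      ultimately show ?thesis by linarith
    qed
    then have "?a = 0" by (intro quad_zero[of "Gr N h v v / 2"]) (simp_all add: Gr_nonneg)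
    moreover have "Gr N h \<psi> v = - S2 N (\<lambda>i j. v i j * lap h \<psi> i j)"
      using sbp_lap[OF pv p\<psi>, of h] Gr_sym[of N h \<psi> v] by simp
    ultimately show ?thesis by (simp add: right_diff_distrib S2_diff mult.commute)
  qed
  show ?thesis
  proof (intro exI conjI allI)
    show "periodic N \<psi>" by (rule p\<psi>)
    fix x y
    have pF: "periodic N (\<lambda>i j. f i j - lap h \<psi> i j)" using f p\<psi> by (intro per_diff per_lap)
    have "f x y - lap h \<psi> x y = 0"
      using el[OF per_ind[of N x y]] S2_ind_left[OF N pF, of x y] by simp
    then show "lap h \<psi> x y = f x y" by simp
  qed
qed


lemma DERIV_S2:
  assumes "\<And>i j. ((\<lambda>s. F s i j) has_real_derivative F' i j) (at x)"
  shows "((\<lambda>s. S2 N (F s)) has_real_derivative S2 N F') (at x)"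
  unfolding S2_def by (intro DERIV_sum assms)

definition Sf :: "model \<Rightarrow> real \<Rightarrow> real \<Rightarrow> real" where
  "Sf P a b = a / M0 P * ln (alpha P * a / M0 P) + b / N0 P * ln (beta P * b / N0 P) + (1 - a - b) * ln (1 - a - b)"

lemma alpha_pos: "M0 P > 0 \<Longrightarrow> N0 P > 0 \<Longrightarrow> alpha P > 0"
proof -
  assume "M0 P > 0" "N0 P > 0"
  then have "sqrt (M0 P / pi) + N0 P / 2 > 0" by (simp add: add_pos_pos)
  then show ?thesis unfolding alpha_def by simp
qed
lemma beta_pos: "M0 P > 0 \<Longrightarrow> N0 P > 0 \<Longrightarrow> beta P > 0"
  unfolding beta_def by (simp add: add_nonneg_pos)

lemma xlnx_deriv:
  "M > 0 \<Longrightarrow> c > 0 \<Longrightarrow> a > 0 \<Longrightarrow> ((\<lambda>s. (a + s * da) / M * ln (c * (a + s * da) / M)) has_real_derivative (da / M * (ln (c * a / M) + 1))) (at 0)"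
  apply (rule derivative_eq_intros refl | simp)+
  apply (simp add: field_simps)
  done

lemma xlnx1_deriv:
  "a > 0 \<Longrightarrow> ((\<lambda>s. (a + s * da) * ln (a + s * da)) has_real_derivative (da * (ln a + 1))) (at 0)"
  apply (rule derivative_eq_intros refl | simp)+
  apply (simp add: field_simps)
  done

lemma Sf_deriv:
  assumes M: "M0 P > 0" "N0 P > 0" and ab: "a > 0" "b > 0" "a + b < 1"
  shows "((\<lambda>s. Sf P (a + s * da) (b + s * db)) has_real_derivative (dSa P a b * da + dSb P a b * db)) (at 0)"
proof -
  have al: "alpha P > 0" and be: "beta P > 0" using alpha_pos beta_pos M by auto
  have e: "\<And>s. 1 - (a + s * da) - (b + s * db) = (1 - a - b) + s * (- da - db)" by (simp add: algebra_simps)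
  have "((\<lambda>s. Sf P (a + s * da) (b + s * db)) has_real_derivative
     (da / M0 P * (ln (alpha P * a / M0 P) + 1) + db / N0 P * (ln (beta P * b / N0 P) + 1)
       + (- da - db) * (ln (1 - a - b) + 1))) (at 0)"
    unfolding Sf_def e
    by (intro DERIV_add xlnx_deriv xlnx1_deriv) (use M ab al be in simp_all)
  moreover have "da / M0 P * (ln (alpha P * a / M0 P) + 1) + db / N0 P * (ln (beta P * b / N0 P) + 1)
       + (- da - db) * (ln (1 - a - b) + 1) = dSa P a b * da + dSb P a b * db"
    unfolding dSa_def dSb_def by (simp add: algebra_simps)
  ultimately show ?thesis by simp
qed

lemma kappa_deriv:
  "A > 0 \<Longrightarrow> ((\<lambda>s. kappa (A + s * A') * (D + s * D')\<^sup>2) has_real_derivative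
     (kappa' A * A' * D\<^sup>2 + 2 * kappa A * D * D')) (at 0)"
  unfolding kappa_def
  apply (rule derivative_eq_intros refl | simp)+
  apply (simp add: kappa_def kappa'_def field_simps power2_eq_square)
  done

lemma quad_deriv: "((\<lambda>s. a + 2 * s * b + s\<^sup>2 * c) has_real_derivative 2 * b) (at 0)"
  by (auto intro!: derivative_eq_intros)

lemma lin_deriv: "((\<lambda>s. a + s * b) has_real_derivative b) (at 0)"
  by (auto intro!: derivative_eq_intros)

lemma Ax_lin: "Ax (\<lambda>i j. a i j + s * b i j) i j = Ax a i j + s * Ax b i j"
  by (simp add: Ax_def field_simps)
lemma Ay_lin: "Ay (\<lambda>i j. a i j + s * b i j) i j = Ay a i j + s * Ay b i j"
  by (simp add: Ay_def field_simps)

definition surf :: "nat \<Rightarrow> real \<Rightarrow> grid \<Rightarrow> real" where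
  "surf N h u = S2 N (\<lambda>i j. kappa (Ax u i j) * (Dx h u i j)\<^sup>2 + kappa (Ay u i j) * (Dy h u i j)\<^sup>2)"

lemma surf_deriv:
  assumes u: "periodic N u" and d: "periodic N d" and pos: "\<And>i j. u i j > 0"
  shows "((\<lambda>s. surf N h (\<lambda>i j. u i j + s * d i j)) has_real_derivative S2 N (\<lambda>i j. Top h u i j * d i j)) (at 0)"
proof -
  have Ax0: "Ax u i j > 0" and Ay0: "Ay u i j > 0" for i j
    using pos[of i j] pos[of "i+1" j] pos[of i "j+1"] by (simp_all add: Ax_def Ay_def)
  have "((\<lambda>s. surf N h (\<lambda>i j. u i j + s * d i j)) has_real_derivative S2 N (\<lambda>i j.
      (kappa' (Ax u i j) * Ax d i j * (Dx h u i j)\<^sup>2 + 2 * kappa (Ax u i j) * Dx h u i j * Dx h d i j)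
    + (kappa' (Ay u i j) * Ay d i j * (Dy h u i j)\<^sup>2 + 2 * kappa (Ay u i j) * Dy h u i j * Dy h d i j))) (at 0)"
    unfolding surf_def Ax_lin Ay_lin Dx_lin Dy_lin
    by (intro DERIV_S2 DERIV_add kappa_deriv Ax0 Ay0)
  moreover have "S2 N (\<lambda>i j.
      (kappa' (Ax u i j) * Ax d i j * (Dx h u i j)\<^sup>2 + 2 * kappa (Ax u i j) * Dx h u i j * Dx h d i j)
    + (kappa' (Ay u i j) * Ay d i j * (Dy h u i j)\<^sup>2 + 2 * kappa (Ay u i j) * Dy h u i j * Dy h d i j))
    = S2 N (\<lambda>i j. Top h u i j * d i j)"
    unfolding sbp_Top[OF u d] by (rule S2_cong) (simp add: algebra_simps)
  ultimately show ?thesis by simp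
qed


lemma alg_Fq:
  fixes x1 x2 e1 e2 e3 t1 t2 y1 y2 b1 b2 a1 a2 dt l1 l2 :: real
  shows "(x1 + x2) + e1 * t1 + e2 * t2 + e3 * (- y1 - y2) + b1 + b2 + a1 * dt / 2 * (2 * - l1) + a2 * dt / 2 * (2 * - l2)
    = (x1 + e1 * t1 - e3 * y1 + b1 - a1 * dt * l1) + (x2 + e2 * t2 - e3 * y2 + b2 - a2 * dt * l2)"
  by (simp add: algebra_simps)

lemma cmul_lin_deriv: "((\<lambda>s. c * (a + s * b)) has_real_derivative c * b) (at 0)"
  by (auto intro!: derivative_eq_intros)

locale setting =
  fixes P :: model and N :: nat and h dt A1 A2 :: real and p1o p2o p1c p2c :: grid
  assumes vm: "valid_model P" and N1: "N \<ge> 1" and hpos: "h > 0" and dtpos: "dt > 0"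
    and A1: "A1 \<ge> 0" and A2: "A2 \<ge> 0"
    and Go: "inGibbs N p1o p2o" and Gc: "inGibbs N p1c p2c"
    and m1: "S2 N p1o = S2 N p1c" and m2: "S2 N p2o = S2 N p2c"
begin

definition B1 :: grid where "B1 = (\<lambda>i j. dHa P (2 * p1c i j - p1o i j) (2 * p2c i j - p2o i j))"
definition B2 :: grid where "B2 = (\<lambda>i j. dHb P (2 * p1c i j - p1o i j) (2 * p2c i j - p2o i j))"

definition mu1 :: "grid \<Rightarrow> grid \<Rightarrow> grid" where
  "mu1 q1 q2 = (\<lambda>i j. dG1 P h q1 q2 i j + dHa P (2 * p1c i j - p1o i j) (2 * p2c i j - p2o i j)
                  - A1 * dt * lap h (\<lambda>i j. q1 i j - p1c i j) i j)"
definition mu2 :: "grid \<Rightarrow> grid \<Rightarrow> grid" where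
  "mu2 q1 q2 = (\<lambda>i j. dG2 P h q1 q2 i j + dHb P (2 * p1c i j - p1o i j) (2 * p2c i j - p2o i j)
                  - A2 * dt * lap h (\<lambda>i j. q2 i j - p2c i j) i j)"

lemma bdf2_iff:
  "bdf2_step P h dt A1 A2 p1o p2o p1c p2c q1 q2 \<longleftrightarrow>
    (\<forall>i j. (3 * q1 i j - 4 * p1c i j + p1o i j) / (2 * dt) = mob1 P * lap h (mu1 q1 q2) i j) \<and>
    (\<forall>i j. (3 * q2 i j - 4 * p2c i j + p2o i j) / (2 * dt) = mob2 P * lap h (mu2 q1 q2) i j)"
  unfolding bdf2_step_def Let_def mu1_def mu2_def ..

definition Fq :: "grid \<Rightarrow> grid \<Rightarrow> real" where
  "Fq q1 q2 = S2 N (\<lambda>i j. Sf P (q1 i j) (q2 i j))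
     + (eps1 P)\<^sup>2 * surf N h q1 + (eps2 P)\<^sup>2 * surf N h q2
     + (eps3 P)\<^sup>2 * surf N h (\<lambda>i j. 1 - q1 i j - q2 i j)
     + S2 N (\<lambda>i j. B1 i j * q1 i j) + S2 N (\<lambda>i j. B2 i j * q2 i j)
     + A1 * dt / 2 * Gr N h (\<lambda>i j. q1 i j - p1c i j) (\<lambda>i j. q1 i j - p1c i j)
     + A2 * dt / 2 * Gr N h (\<lambda>i j. q2 i j - p2c i j) (\<lambda>i j. q2 i j - p2c i j)"

lemma M0pos: "M0 P > 0" and N0pos: "N0 P > 0"
  using vm unfolding valid_model_def by auto

lemma pc_per: "periodic N p1c" "periodic N p2c" "periodic N p1o" "periodic N p2o"
  using Gc Go unfolding inGibbs_def by auto

lemma per_B: "periodic N B1" "periodic N B2"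
  unfolding B1_def B2_def using pc_per by (rule_tac perI; simp add: per_x per_y)+

lemma Fq_deriv:
  assumes p1: "periodic N q1" and p2: "periodic N q2" and pd1: "periodic N d1" and pd2: "periodic N d2"
    and pos: "\<And>i j. q1 i j > 0 \<and> q2 i j > 0 \<and> q1 i j + q2 i j < 1"
  shows "((\<lambda>s. Fq (\<lambda>i j. q1 i j + s * d1 i j) (\<lambda>i j. q2 i j + s * d2 i j)) has_real_derivative
     (S2 N (\<lambda>i j. mu1 q1 q2 i j * d1 i j) + S2 N (\<lambda>i j. mu2 q1 q2 i j * d2 i j))) (at 0)"
proof -
  let ?u3 = "\<lambda>i j. 1 - q1 i j - q2 i j"
  let ?d3 = "\<lambda>i j. - d1 i j - d2 i j"
  let ?e1 = "\<lambda>i j. q1 i j - p1c i j"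
  let ?e2 = "\<lambda>i j. q2 i j - p2c i j"
  have pu3: "periodic N ?u3" using p1 p2 by (intro per_diff per_const)
  have pos3: "\<And>i j. q2 i j < 1 - q1 i j" using pos by (smt (verit))
  have pd3: "periodic N ?d3" by (rule perI) (simp_all add: per_x per_y pd1 pd2)
  have pe1: "periodic N ?e1" using p1 pc_per by (intro per_diff)
  have pe2: "periodic N ?e2" using p2 pc_per by (intro per_diff)
  have r3: "(\<lambda>i j. 1 - (q1 i j + s * d1 i j) - (q2 i j + s * d2 i j)) = (\<lambda>i j. ?u3 i j + s * ?d3 i j)" for s
    by (simp add: algebra_simps)
  have r1: "(\<lambda>i j. (q1 i j + s * d1 i j) - p1c i j) = (\<lambda>i j. ?e1 i j + s * d1 i j)" for s
    by (simp add: algebra_simps)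
  have r2: "(\<lambda>i j. (q2 i j + s * d2 i j) - p2c i j) = (\<lambda>i j. ?e2 i j + s * d2 i j)" for s
    by (simp add: algebra_simps)
  have "((\<lambda>s. Fq (\<lambda>i j. q1 i j + s * d1 i j) (\<lambda>i j. q2 i j + s * d2 i j)) has_real_derivative
     S2 N (\<lambda>i j. dSa P (q1 i j) (q2 i j) * d1 i j + dSb P (q1 i j) (q2 i j) * d2 i j)
     + (eps1 P)\<^sup>2 * S2 N (\<lambda>i j. Top h q1 i j * d1 i j) + (eps2 P)\<^sup>2 * S2 N (\<lambda>i j. Top h q2 i j * d2 i j)
     + (eps3 P)\<^sup>2 * S2 N (\<lambda>i j. Top h ?u3 i j * ?d3 i j)
     + S2 N (\<lambda>i j. B1 i j * d1 i j) + S2 N (\<lambda>i j. B2 i j * d2 i j)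
     + A1 * dt / 2 * (2 * Gr N h ?e1 d1) + A2 * dt / 2 * (2 * Gr N h ?e2 d2)) (at 0)"
    unfolding Fq_def r1 r2 r3 Gr_quad
    apply (intro DERIV_add DERIV_cmult DERIV_S2 Sf_deriv surf_deriv quad_deriv cmul_lin_deriv lin_deriv)
    using M0pos N0pos pos pos3 p1 p2 pd1 pd2 pu3 pd3 by auto
  moreover have "S2 N (\<lambda>i j. dSa P (q1 i j) (q2 i j) * d1 i j + dSb P (q1 i j) (q2 i j) * d2 i j)
     + (eps1 P)\<^sup>2 * S2 N (\<lambda>i j. Top h q1 i j * d1 i j) + (eps2 P)\<^sup>2 * S2 N (\<lambda>i j. Top h q2 i j * d2 i j)
     + (eps3 P)\<^sup>2 * S2 N (\<lambda>i j. Top h ?u3 i j * ?d3 i j)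
     + S2 N (\<lambda>i j. B1 i j * d1 i j) + S2 N (\<lambda>i j. B2 i j * d2 i j)
     + A1 * dt / 2 * (2 * Gr N h ?e1 d1) + A2 * dt / 2 * (2 * Gr N h ?e2 d2)
     = S2 N (\<lambda>i j. mu1 q1 q2 i j * d1 i j) + S2 N (\<lambda>i j. mu2 q1 q2 i j * d2 i j)"
  proof -
    have a1: "S2 N (\<lambda>i j. mu1 q1 q2 i j * d1 i j) = S2 N (\<lambda>i j. dSa P (q1 i j) (q2 i j) * d1 i j)
       + (eps1 P)\<^sup>2 * S2 N (\<lambda>i j. Top h q1 i j * d1 i j) - (eps3 P)\<^sup>2 * S2 N (\<lambda>i j. Top h ?u3 i j * d1 i j)
       + S2 N (\<lambda>i j. B1 i j * d1 i j) - A1 * dt * S2 N (\<lambda>i j. d1 i j * lap h ?e1 i j)"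
    proof -
      have "S2 N (\<lambda>i j. mu1 q1 q2 i j * d1 i j) = S2 N (\<lambda>i j. dSa P (q1 i j) (q2 i j) * d1 i j
       + (eps1 P)\<^sup>2 * (Top h q1 i j * d1 i j) - (eps3 P)\<^sup>2 * (Top h ?u3 i j * d1 i j)
       + B1 i j * d1 i j - A1 * dt * (d1 i j * lap h ?e1 i j))"
        by (rule S2_cong) (simp add: mu1_def dG1_def B1_def algebra_simps)
      then show ?thesis by (simp only: S2_add S2_diff S2_cmult)
    qed
    have a2: "S2 N (\<lambda>i j. mu2 q1 q2 i j * d2 i j) = S2 N (\<lambda>i j. dSb P (q1 i j) (q2 i j) * d2 i j)
       + (eps2 P)\<^sup>2 * S2 N (\<lambda>i j. Top h q2 i j * d2 i j) - (eps3 P)\<^sup>2 * S2 N (\<lambda>i j. Top h ?u3 i j * d2 i j)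
       + S2 N (\<lambda>i j. B2 i j * d2 i j) - A2 * dt * S2 N (\<lambda>i j. d2 i j * lap h ?e2 i j)"
    proof -
      have "S2 N (\<lambda>i j. mu2 q1 q2 i j * d2 i j) = S2 N (\<lambda>i j. dSb P (q1 i j) (q2 i j) * d2 i j
       + (eps2 P)\<^sup>2 * (Top h q2 i j * d2 i j) - (eps3 P)\<^sup>2 * (Top h ?u3 i j * d2 i j)
       + B2 i j * d2 i j - A2 * dt * (d2 i j * lap h ?e2 i j))"
        by (rule S2_cong) (simp add: mu2_def dG2_def B2_def algebra_simps)
      then show ?thesis by (simp only: S2_add S2_diff S2_cmult)
    qed
    have a3: "S2 N (\<lambda>i j. Top h ?u3 i j * ?d3 i j) = - S2 N (\<lambda>i j. Top h ?u3 i j * d1 i j) - S2 N (\<lambda>i j. Top h ?u3 i j * d2 i j)"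
    proof -
      have "S2 N (\<lambda>i j. Top h ?u3 i j * ?d3 i j) = S2 N (\<lambda>i j. - (Top h ?u3 i j * d1 i j) - Top h ?u3 i j * d2 i j)"
        by (rule S2_cong) (simp add: algebra_simps)
      then show ?thesis by (simp only: S2_diff S2_minus)
    qed
    have a4: "S2 N (\<lambda>i j. dSa P (q1 i j) (q2 i j) * d1 i j + dSb P (q1 i j) (q2 i j) * d2 i j)
      = S2 N (\<lambda>i j. dSa P (q1 i j) (q2 i j) * d1 i j) + S2 N (\<lambda>i j. dSb P (q1 i j) (q2 i j) * d2 i j)"
      by (rule S2_add)
    have g1: "Gr N h ?e1 d1 = - S2 N (\<lambda>i j. d1 i j * lap h ?e1 i j)"
      using sbp_lap[OF pd1 pe1, of h] Gr_sym[of N h ?e1 d1] by simp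
    have g2: "Gr N h ?e2 d2 = - S2 N (\<lambda>i j. d2 i j * lap h ?e2 i j)"
      using sbp_lap[OF pd2 pe2, of h] Gr_sym[of N h ?e2 d2] by simp
    show ?thesis unfolding a1 a2 a3 a4 g1 g2 by (rule alg_Fq)
  qed
  ultimately show ?thesis by simp
qed


definition c1 :: real where "c1 = 3 / (2 * dt * mob1 P)"
definition c2 :: real where "c2 = 3 / (2 * dt * mob2 P)"
definition g1 :: grid where "g1 = (\<lambda>i j. (p1c i j - p1o i j) / (2 * dt * mob1 P))"
definition g2 :: grid where "g2 = (\<lambda>i j. (p2c i j - p2o i j) / (2 * dt * mob2 P))"
definition qw1 :: "grid \<Rightarrow> grid" where "qw1 w = (\<lambda>i j. p1c i j + lap h w i j)"
definition qw2 :: "grid \<Rightarrow> grid" where "qw2 w = (\<lambda>i j. p2c i j + lap h w i j)"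

definition J :: "grid \<Rightarrow> grid \<Rightarrow> real" where
  "J w1 w2 = Fq (qw1 w1) (qw2 w2) + c1 / 2 * Gr N h w1 w1 + c2 / 2 * Gr N h w2 w2
     + S2 N (\<lambda>i j. g1 i j * w1 i j) + S2 N (\<lambda>i j. g2 i j * w2 i j)"

lemma per_g: "periodic N g1" "periodic N g2"
  unfolding g1_def g2_def using pc_per by (rule_tac perI; simp add: per_x per_y)+

lemma S2_g: "S2 N g1 = 0" "S2 N g2 = 0"
proof -
  have "S2 N g1 = (S2 N p1c - S2 N p1o) / (2 * dt * mob1 P)"
    unfolding g1_def by (simp only: S2_divc S2_diff)
  then show "S2 N g1 = 0" using m1 by simp
  have "S2 N g2 = (S2 N p2c - S2 N p2o) / (2 * dt * mob2 P)"
    unfolding g2_def by (simp only: S2_divc S2_diff)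
  then show "S2 N g2 = 0" using m2 by simp
qed

lemma per_qw: "periodic N w \<Longrightarrow> periodic N (qw1 w)" "periodic N w \<Longrightarrow> periodic N (qw2 w)"
  unfolding qw1_def qw2_def using pc_per by (auto intro: per_add per_lap)

lemma qw1_lin: "qw1 (\<lambda>i j. w i j + s * v i j) = (\<lambda>i j. qw1 w i j + s * lap h v i j)"
  unfolding qw1_def lap_lin by (simp add: algebra_simps)
lemma qw2_lin: "qw2 (\<lambda>i j. w i j + s * v i j) = (\<lambda>i j. qw2 w i j + s * lap h v i j)"
  unfolding qw2_def lap_lin by (simp add: algebra_simps)

lemma S2_lin_g: "S2 N (\<lambda>i j. g i j * (w i j + s * v i j)) = S2 N (\<lambda>i j. g i j * w i j) + s * S2 N (\<lambda>i j. g i j * v i j)"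
proof -
  have "S2 N (\<lambda>i j. g i j * (w i j + s * v i j)) = S2 N (\<lambda>i j. g i j * w i j + s * (g i j * v i j))"
    by (rule S2_cong) (simp add: algebra_simps)
  then show ?thesis by (simp only: S2_add S2_cmult)
qed

lemma per_mu:
  assumes p1: "periodic N q1" and p2: "periodic N q2"
  shows "periodic N (mu1 q1 q2)" "periodic N (mu2 q1 q2)"
proof -
  have pu3: "periodic N (\<lambda>i j. 1 - q1 i j - q2 i j)" using p1 p2 by (intro per_diff per_const)
  have pe1: "periodic N (\<lambda>i j. q1 i j - p1c i j)" using p1 pc_per by (intro per_diff)
  have pe2: "periodic N (\<lambda>i j. q2 i j - p2c i j)" using p2 pc_per by (intro per_diff)
  have t: "periodic N (Top h q1)" "periodic N (Top h q2)" "periodic N (Top h (\<lambda>i j. 1 - q1 i j - q2 i j))"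
    using p1 p2 pu3 by (simp_all add: per_Top)
  have l: "periodic N (lap h (\<lambda>i j. q1 i j - p1c i j))" "periodic N (lap h (\<lambda>i j. q2 i j - p2c i j))"
    using pe1 pe2 by (simp_all add: per_lap)
  show "periodic N (mu1 q1 q2)" unfolding mu1_def dG1_def
    by (rule perI) (simp_all add: per_x[OF p1] per_x[OF p2] per_y[OF p1] per_y[OF p2] per_x[OF t(1)] per_y[OF t(1)]
       per_x[OF t(3)] per_y[OF t(3)] per_x[OF l(1)] per_y[OF l(1)] per_x[OF pc_per(1)] per_y[OF pc_per(1)]
       per_x[OF pc_per(2)] per_y[OF pc_per(2)] per_x[OF pc_per(3)] per_y[OF pc_per(3)] per_x[OF pc_per(4)] per_y[OF pc_per(4)])
  show "periodic N (mu2 q1 q2)" unfolding mu2_def dG2_def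
    by (rule perI) (simp_all add: per_x[OF p1] per_x[OF p2] per_y[OF p1] per_y[OF p2] per_x[OF t(2)] per_y[OF t(2)]
       per_x[OF t(3)] per_y[OF t(3)] per_x[OF l(2)] per_y[OF l(2)] per_x[OF pc_per(1)] per_y[OF pc_per(1)]
       per_x[OF pc_per(2)] per_y[OF pc_per(2)] per_x[OF pc_per(3)] per_y[OF pc_per(3)] per_x[OF pc_per(4)] per_y[OF pc_per(4)])
qed

lemma J_deriv:
  assumes pw1: "periodic N w1" and pw2: "periodic N w2" and pv1: "periodic N v1" and pv2: "periodic N v2"
    and pos: "\<And>i j. qw1 w1 i j > 0 \<and> qw2 w2 i j > 0 \<and> qw1 w1 i j + qw2 w2 i j < 1"
  shows "((\<lambda>s. J (\<lambda>i j. w1 i j + s * v1 i j) (\<lambda>i j. w2 i j + s * v2 i j)) has_real_derivative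
     (S2 N (\<lambda>i j. mu1 (qw1 w1) (qw2 w2) i j * lap h v1 i j) + S2 N (\<lambda>i j. mu2 (qw1 w1) (qw2 w2) i j * lap h v2 i j)
      + c1 / 2 * (2 * Gr N h w1 v1) + c2 / 2 * (2 * Gr N h w2 v2)
      + S2 N (\<lambda>i j. g1 i j * v1 i j) + S2 N (\<lambda>i j. g2 i j * v2 i j))) (at 0)"
  unfolding J_def qw1_lin qw2_lin Gr_quad S2_lin_g
  apply (intro DERIV_add DERIV_cmult Fq_deriv quad_deriv lin_deriv)
  using pos pw1 pw2 pv1 pv2 by (auto intro: per_qw per_lap)

lemma J_deriv_EL:
  assumes pw1: "periodic N w1" and pw2: "periodic N w2" and pv1: "periodic N v1" and pv2: "periodic N v2"
    and pos: "\<And>i j. qw1 w1 i j > 0 \<and> qw2 w2 i j > 0 \<and> qw1 w1 i j + qw2 w2 i j < 1"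
  shows "((\<lambda>s. J (\<lambda>i j. w1 i j + s * v1 i j) (\<lambda>i j. w2 i j + s * v2 i j)) has_real_derivative
     (S2 N (\<lambda>i j. v1 i j * (lap h (mu1 (qw1 w1) (qw2 w2)) i j - c1 * lap h w1 i j + g1 i j))
    + S2 N (\<lambda>i j. v2 i j * (lap h (mu2 (qw1 w1) (qw2 w2)) i j - c2 * lap h w2 i j + g2 i j)))) (at 0)"
proof -
  let ?m1 = "mu1 (qw1 w1) (qw2 w2)" and ?m2 = "mu2 (qw1 w1) (qw2 w2)"
  have pm: "periodic N ?m1" "periodic N ?m2" using per_mu per_qw pw1 pw2 by auto
  have e1: "S2 N (\<lambda>i j. ?m1 i j * lap h v1 i j) = S2 N (\<lambda>i j. v1 i j * lap h ?m1 i j)"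
    using sbp_lap_sym[OF pv1 pm(1), of h] by (simp add: mult.commute)
  have e2: "S2 N (\<lambda>i j. ?m2 i j * lap h v2 i j) = S2 N (\<lambda>i j. v2 i j * lap h ?m2 i j)"
    using sbp_lap_sym[OF pv2 pm(2), of h] by (simp add: mult.commute)
  have f1: "Gr N h w1 v1 = - S2 N (\<lambda>i j. v1 i j * lap h w1 i j)"
    using sbp_lap[OF pv1 pw1, of h] Gr_sym[of N h w1 v1] by simp
  have f2: "Gr N h w2 v2 = - S2 N (\<lambda>i j. v2 i j * lap h w2 i j)"
    using sbp_lap[OF pv2 pw2, of h] Gr_sym[of N h w2 v2] by simp
  have k1: "S2 N (\<lambda>i j. v1 i j * (lap h ?m1 i j - c1 * lap h w1 i j + g1 i j))
     = S2 N (\<lambda>i j. v1 i j * lap h ?m1 i j) - c1 * S2 N (\<lambda>i j. v1 i j * lap h w1 i j) + S2 N (\<lambda>i j. g1 i j * v1 i j)"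
  proof -
    have "S2 N (\<lambda>i j. v1 i j * (lap h ?m1 i j - c1 * lap h w1 i j + g1 i j))
     = S2 N (\<lambda>i j. v1 i j * lap h ?m1 i j - c1 * (v1 i j * lap h w1 i j) + g1 i j * v1 i j)"
      by (rule S2_cong) (simp add: algebra_simps)
    then show ?thesis by (simp only: S2_add S2_diff S2_cmult)
  qed
  have k2: "S2 N (\<lambda>i j. v2 i j * (lap h ?m2 i j - c2 * lap h w2 i j + g2 i j))
     = S2 N (\<lambda>i j. v2 i j * lap h ?m2 i j) - c2 * S2 N (\<lambda>i j. v2 i j * lap h w2 i j) + S2 N (\<lambda>i j. g2 i j * v2 i j)"
  proof -
    have "S2 N (\<lambda>i j. v2 i j * (lap h ?m2 i j - c2 * lap h w2 i j + g2 i j))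
     = S2 N (\<lambda>i j. v2 i j * lap h ?m2 i j - c2 * (v2 i j * lap h w2 i j) + g2 i j * v2 i j)"
      by (rule S2_cong) (simp add: algebra_simps)
    then show ?thesis by (simp only: S2_add S2_diff S2_cmult)
  qed
  have alg: "\<And>a b c d x y u v C1 C2 :: real. a + b + C1 / 2 * (2 * - x) + C2 / 2 * (2 * - y) + u + v
      = (a - C1 * x + u) + (b - C2 * y + v)" by (simp add: algebra_simps)
  show ?thesis using J_deriv[OF assms] unfolding e1 e2 f1 f2 k1 k2 alg .
qed


lemma J_deriv_B:
  assumes pw1: "periodic N w1" and pw2: "periodic N w2" and pv1: "periodic N v1" and pv2: "periodic N v2"
    and pos: "\<And>i j. qw1 w1 i j > 0 \<and> qw2 w2 i j > 0 \<and> qw1 w1 i j + qw2 w2 i j < 1"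
    and pg1: "periodic N ga1" and pg2: "periodic N ga2"
    and lg1: "\<And>i j. lap h ga1 i j = g1 i j" and lg2: "\<And>i j. lap h ga2 i j = g2 i j"
  shows "((\<lambda>s. J (\<lambda>i j. w1 i j + s * v1 i j) (\<lambda>i j. w2 i j + s * v2 i j)) has_real_derivative
     (S2 N (\<lambda>i j. (mu1 (qw1 w1) (qw2 w2) i j - c1 * w1 i j + ga1 i j) * lap h v1 i j)
    + S2 N (\<lambda>i j. (mu2 (qw1 w1) (qw2 w2) i j - c2 * w2 i j + ga2 i j) * lap h v2 i j))) (at 0)"
proof -
  let ?m1 = "mu1 (qw1 w1) (qw2 w2)" and ?m2 = "mu2 (qw1 w1) (qw2 w2)"
  have f1: "Gr N h w1 v1 = - S2 N (\<lambda>i j. w1 i j * lap h v1 i j)"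
    using sbp_lap[OF pw1 pv1, of h] by simp
  have f2: "Gr N h w2 v2 = - S2 N (\<lambda>i j. w2 i j * lap h v2 i j)"
    using sbp_lap[OF pw2 pv2, of h] by simp
  have h1: "S2 N (\<lambda>i j. g1 i j * v1 i j) = S2 N (\<lambda>i j. ga1 i j * lap h v1 i j)"
    using sbp_lap_sym[OF pg1 pv1, of h] lg1 by simp
  have h2: "S2 N (\<lambda>i j. g2 i j * v2 i j) = S2 N (\<lambda>i j. ga2 i j * lap h v2 i j)"
    using sbp_lap_sym[OF pg2 pv2, of h] lg2 by simp
  have k1: "S2 N (\<lambda>i j. (?m1 i j - c1 * w1 i j + ga1 i j) * lap h v1 i j)
     = S2 N (\<lambda>i j. ?m1 i j * lap h v1 i j) - c1 * S2 N (\<lambda>i j. w1 i j * lap h v1 i j) + S2 N (\<lambda>i j. ga1 i j * lap h v1 i j)"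
  proof -
    have "S2 N (\<lambda>i j. (?m1 i j - c1 * w1 i j + ga1 i j) * lap h v1 i j)
     = S2 N (\<lambda>i j. ?m1 i j * lap h v1 i j - c1 * (w1 i j * lap h v1 i j) + ga1 i j * lap h v1 i j)"
      by (rule S2_cong) (simp add: algebra_simps)
    then show ?thesis by (simp only: S2_add S2_diff S2_cmult)
  qed
  have k2: "S2 N (\<lambda>i j. (?m2 i j - c2 * w2 i j + ga2 i j) * lap h v2 i j)
     = S2 N (\<lambda>i j. ?m2 i j * lap h v2 i j) - c2 * S2 N (\<lambda>i j. w2 i j * lap h v2 i j) + S2 N (\<lambda>i j. ga2 i j * lap h v2 i j)"
  proof -
    have "S2 N (\<lambda>i j. (?m2 i j - c2 * w2 i j + ga2 i j) * lap h v2 i j)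
     = S2 N (\<lambda>i j. ?m2 i j * lap h v2 i j - c2 * (w2 i j * lap h v2 i j) + ga2 i j * lap h v2 i j)"
      by (rule S2_cong) (simp add: algebra_simps)
    then show ?thesis by (simp only: S2_add S2_diff S2_cmult)
  qed
  have alg: "\<And>a b x y u v C1 C2 :: real. a + b + C1 / 2 * (2 * - x) + C2 / 2 * (2 * - y) + u + v
      = (a - C1 * x + u) + (b - C2 * y + v)" by (simp add: algebra_simps)
  show ?thesis using J_deriv[OF pw1 pw2 pv1 pv2 pos] unfolding f1 f2 h1 h2 k1 k2 alg .
qed

end


lemma kp_bound:
  assumes a: "a > 0" and b: "b > 0" and h: "h > 0"
  shows "\<bar>kappa' ((b + a) / 2) * ((b - a) / h)\<^sup>2\<bar> \<le> 1 / (9 * h\<^sup>2)"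
proof -
  have "(b - a)\<^sup>2 \<le> (b + a)\<^sup>2" using a b by (simp add: power2_eq_square algebra_simps)
  then have "(b - a)\<^sup>2 / (b + a)\<^sup>2 \<le> 1" using a b by simp
  moreover have "\<bar>kappa' ((b + a) / 2) * ((b - a) / h)\<^sup>2\<bar> = ((b - a)\<^sup>2 / (b + a)\<^sup>2) * (1 / (9 * h\<^sup>2))"
    using a b h unfolding kappa'_def by (simp add: abs_mult power_divide field_simps)
  moreover have "0 \<le> 1 / (9 * h\<^sup>2)" by simp
  ultimately show ?thesis using mult_right_mono[of "(b - a)\<^sup>2 / (b + a)\<^sup>2" 1 "1 / (9 * h\<^sup>2)"] by simp
qed

lemma k_bound:
  assumes a: "a > 0" and b: "b > 0" and h: "h > 0"
  shows "\<bar>kappa ((b + a) / 2) * ((b - a) / h)\<bar> \<le> 1 / (18 * h)"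
proof -
  have "\<bar>b - a\<bar> \<le> b + a" using a b by simp
  then have "\<bar>b - a\<bar> / (b + a) \<le> 1" using a b by simp
  moreover have "\<bar>kappa ((b + a) / 2) * ((b - a) / h)\<bar> = (\<bar>b - a\<bar> / (b + a)) * (1 / (18 * h))"
  proof -
    have ba: "b + a \<noteq> 0" using a b by simp
    have e36: "36 * ((b + a) / 2) = 18 * (b + a)" by simp
    have k: "kappa ((b + a) / 2) = 1 / (18 * (b + a))" unfolding kappa_def e36 ..
    have "kappa ((b + a) / 2) * ((b - a) / h) = ((b - a) / (b + a)) * (1 / (18 * h))"
      unfolding k using ba h by (simp add: field_simps)
    then show ?thesis using a b h by (simp add: abs_mult abs_div)
  qed
  moreover have "0 \<le> 1 / (18 * h)" using h by simp
  ultimately show ?thesis using mult_right_mono[of "\<bar>b - a\<bar> / (b + a)" 1 "1 / (18 * h)"] by simp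
qed

lemma Top_bound:
  assumes pos: "\<And>i j. u i j > 0" and h: "h > 0"
  shows "\<bar>Top h u i j\<bar> \<le> 1 / h\<^sup>2"
proof -
  have F1: "\<bar>kappa' (Ax u i j) * (Dx h u i j)\<^sup>2\<bar> \<le> 1 / (9 * h\<^sup>2)" for i j
    unfolding Ax_def Dx_def by (rule kp_bound[OF pos pos h])
  have F2: "\<bar>kappa' (Ay u i j) * (Dy h u i j)\<^sup>2\<bar> \<le> 1 / (9 * h\<^sup>2)" for i j
    unfolding Ay_def Dy_def by (rule kp_bound[OF pos pos h])
  have G1: "\<bar>kappa (Ax u i j) * Dx h u i j\<bar> \<le> 1 / (18 * h)" for i j
    unfolding Ax_def Dx_def by (rule k_bound[OF pos pos h])
  have G2: "\<bar>kappa (Ay u i j) * Dy h u i j\<bar> \<le> 1 / (18 * h)" for i j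
    unfolding Ay_def Dy_def by (rule k_bound[OF pos pos h])
  let ?F = "\<lambda>i j. kappa' (Ax u i j) * (Dx h u i j)\<^sup>2"
  let ?G = "\<lambda>i j. kappa (Ax u i j) * Dx h u i j"
  let ?F' = "\<lambda>i j. kappa' (Ay u i j) * (Dy h u i j)\<^sup>2"
  let ?G' = "\<lambda>i j. kappa (Ay u i j) * Dy h u i j"
  have a1: "\<bar>ax ?F i j\<bar> \<le> 1 / (9 * h\<^sup>2)"
    unfolding ax_def using F1[of i j] F1[of "i-1" j] by (simp add: abs_le_iff; linarith?)
  have a2: "\<bar>ay ?F' i j\<bar> \<le> 1 / (9 * h\<^sup>2)"
    unfolding ay_def using F2[of i j] F2[of i "j-1"] by (simp add: abs_le_iff; linarith?)
  have d1: "\<bar>dx h ?G i j\<bar> \<le> 1 / (9 * h\<^sup>2)"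
  proof -
    have "\<bar>?G i j - ?G (i-1) j\<bar> \<le> 1 / (9 * h)" using G1[of i j] G1[of "i-1" j] by (simp add: abs_le_iff; linarith?)
    then have "\<bar>?G i j - ?G (i-1) j\<bar> / h \<le> (1 / (9 * h)) / h" using h by (intro divide_right_mono) simp_all
    moreover have "(1 / (9 * h)) / h = 1 / (9 * h\<^sup>2)" by (simp add: power2_eq_square)
    ultimately show ?thesis unfolding dx_def using h by (simp add: abs_div power2_eq_square)
  qed
  have d2: "\<bar>dy h ?G' i j\<bar> \<le> 1 / (9 * h\<^sup>2)"
  proof -
    have "\<bar>?G' i j - ?G' i (j-1)\<bar> \<le> 1 / (9 * h)" using G2[of i j] G2[of i "j-1"] by (simp add: abs_le_iff; linarith?)
    then have "\<bar>?G' i j - ?G' i (j-1)\<bar> / h \<le> (1 / (9 * h)) / h" using h by (intro divide_right_mono) simp_all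
    moreover have "(1 / (9 * h)) / h = 1 / (9 * h\<^sup>2)" by (simp add: power2_eq_square)
    ultimately show ?thesis unfolding dy_def using h by (simp add: abs_div power2_eq_square)
  qed
  have "\<bar>Top h u i j\<bar> \<le> 6 * (1 / (9 * h\<^sup>2))"
    unfolding Top_def using a1 a2 d1 d2 by linarith
  also have "\<dots> \<le> 1 / h\<^sup>2" using h by (simp add: field_simps)
  finally show ?thesis .
qed

lemma lap_bound:
  assumes b: "\<And>i j. \<bar>e i j\<bar> \<le> M" and h: "h > 0"
  shows "\<bar>lap h e i j\<bar> \<le> 8 * M / h\<^sup>2"
proof -
  have "lap h e i j = (e (i+1) j + e (i-1) j + e i (j+1) + e i (j-1) - 4 * e i j) / h\<^sup>2"
    unfolding lap_def dx_def dy_def Dx_def Dy_def using h by (simp add: field_simps power2_eq_square)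
  moreover have "\<bar>e (i+1) j + e (i-1) j + e i (j+1) + e i (j-1) - 4 * e i j\<bar> \<le> 8 * M"
    using b[of "i+1" j] b[of "i-1" j] b[of i "j+1"] b[of i "j-1"] b[of i j] by (simp add: abs_le_iff; linarith?)
  ultimately show ?thesis using h by (simp add: abs_div divide_right_mono)
qed

lemma cont_fst [continuous_intros]: "continuous_on S (\<lambda>p::grid\<times>grid. fst p i j)"
  using continuous_on_compose[OF continuous_on_fst[OF continuous_on_id] cont_eval[of "fst ` S" i j]]
  by (simp add: o_def)
lemma cont_snd [continuous_intros]: "continuous_on S (\<lambda>p::grid\<times>grid. snd p i j)"
  using continuous_on_compose[OF continuous_on_snd[OF continuous_on_id] cont_eval[of "snd ` S" i j]]
  by (simp add: o_def)

lemma cont_Ax: "(\<And>i j. continuous_on S (\<lambda>x. G x i j)) \<Longrightarrow> continuous_on S (\<lambda>x. Ax (G x) i j)"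
  unfolding Ax_def by (intro continuous_intros) auto
lemma cont_Ay: "(\<And>i j. continuous_on S (\<lambda>x. G x i j)) \<Longrightarrow> continuous_on S (\<lambda>x. Ay (G x) i j)"
  unfolding Ay_def by (intro continuous_intros) auto
lemma cont_Dx: "h \<noteq> 0 \<Longrightarrow> (\<And>i j. continuous_on S (\<lambda>x. G x i j)) \<Longrightarrow> continuous_on S (\<lambda>x. Dx h (G x) i j)"
  unfolding Dx_def by (intro continuous_intros) auto
lemma cont_Dy: "h \<noteq> 0 \<Longrightarrow> (\<And>i j. continuous_on S (\<lambda>x. G x i j)) \<Longrightarrow> continuous_on S (\<lambda>x. Dy h (G x) i j)"
  unfolding Dy_def by (intro continuous_intros) auto
lemma cont_lap: "h \<noteq> 0 \<Longrightarrow> (\<And>i j. continuous_on S (\<lambda>x. G x i j)) \<Longrightarrow> continuous_on S (\<lambda>x. lap h (G x) i j)"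
  unfolding lap_def dx_def Dx_def dy_def Dy_def by (intro continuous_intros) auto


lemma lap_shift: "lap h (\<lambda>i j. w i j - c) = lap h w"
  unfolding lap_def dx_def dy_def Dx_def Dy_def by simp

context setting
begin

definition Dom :: "real \<Rightarrow> (grid \<times> grid) set" where
  "Dom \<delta> = {p. periodic N (fst p) \<and> periodic N (snd p) \<and>
     (\<forall>i j. \<delta> \<le> qw1 (fst p) i j \<and> \<delta> \<le> qw2 (snd p) i j \<and> \<delta> \<le> 1 - qw1 (fst p) i j - qw2 (snd p) i j)}"

definition Rb :: real where "Rb = 4 * real N ^ 4 * h\<^sup>2 * 1"

definition K :: "real \<Rightarrow> (grid \<times> grid) set" where
  "K \<delta> = Dom \<delta> \<inter> {p. fst p 1 1 = 0 \<and> snd p 1 1 = 0} \<inter> {p. \<forall>i j. \<bar>fst p i j\<bar> \<le> Rb \<and> \<bar>snd p i j\<bar> \<le> Rb}"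

lemma pc_range: "0 < p1c i j" "0 < p2c i j" "p1c i j + p2c i j < 1"
  using Gc unfolding inGibbs_def by auto

lemma Dom_box:
  assumes d: "\<delta> > 0" and p: "p \<in> Dom \<delta>" and n: "fst p 1 1 = 0" "snd p 1 1 = 0"
  shows "\<bar>fst p i j\<bar> \<le> Rb \<and> \<bar>snd p i j\<bar> \<le> Rb"
proof -
  have per: "periodic N (fst p)" "periodic N (snd p)" and b: "\<And>i j. \<delta> \<le> qw1 (fst p) i j \<and> \<delta> \<le> qw2 (snd p) i j \<and> \<delta> \<le> 1 - qw1 (fst p) i j - qw2 (snd p) i j"
    using p unfolding Dom_def by auto
  have l1: "\<bar>lap h (fst p) i j\<bar> \<le> 1" for i j
    using b[of i j] d pc_range[of i j] unfolding qw1_def qw2_def by (simp add: abs_le_iff)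
  have l2: "\<bar>lap h (snd p) i j\<bar> \<le> 1" for i j
    using b[of i j] d pc_range[of i j] unfolding qw1_def qw2_def by (simp add: abs_le_iff)
  show ?thesis unfolding Rb_def
    using lap_box[OF hpos N1 per(1) n(1), of 1] lap_box[OF hpos N1 per(2) n(2), of 1] l1 l2 by simp
qed

lemma cont_qw1 [continuous_intros]: "continuous_on S (\<lambda>p::grid\<times>grid. qw1 (fst p) i j)"
  unfolding qw1_def using hpos by (intro continuous_intros cont_lap) auto
lemma cont_qw2 [continuous_intros]: "continuous_on S (\<lambda>p::grid\<times>grid. qw2 (snd p) i j)"
  unfolding qw2_def using hpos by (intro continuous_intros cont_lap) auto

lemma closed_per_fst: "closed {p::grid\<times>grid. periodic N (fst p)}"
  unfolding periodic_def by (intro closed_Collect_all closed_Collect_eq cont_fst)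
lemma closed_per_snd: "closed {p::grid\<times>grid. periodic N (snd p)}"
  unfolding periodic_def by (intro closed_Collect_all closed_Collect_eq cont_snd)

lemma closed_Dom: "closed (Dom \<delta>)"
proof -
  have "Dom \<delta> = {p. periodic N (fst p)} \<inter> {p. periodic N (snd p)} \<inter>
     {p. \<forall>i j. \<delta> \<le> qw1 (fst p) i j \<and> \<delta> \<le> qw2 (snd p) i j \<and> \<delta> \<le> 1 - qw1 (fst p) i j - qw2 (snd p) i j}"
    unfolding Dom_def by auto
  also have "closed \<dots>"
    by (intro closed_Int closed_per_fst closed_per_snd closed_Collect_all closed_Collect_conj closed_Collect_le
          continuous_intros)
  finally show ?thesis .
qed

lemma compact_box2: "compact {p::grid\<times>grid. \<forall>i j. \<bar>fst p i j\<bar> \<le> R \<and> \<bar>snd p i j\<bar> \<le> R}"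
proof -
  have "{p::grid\<times>grid. \<forall>i j. \<bar>fst p i j\<bar> \<le> R \<and> \<bar>snd p i j\<bar> \<le> R} =
      {w::grid. \<forall>i j. \<bar>w i j\<bar> \<le> R} \<times> {w::grid. \<forall>i j. \<bar>w i j\<bar> \<le> R}" by auto
  then show ?thesis using compact_Times[OF compact_box compact_box] by simp
qed

lemma compact_K: "compact (K \<delta>)"
  unfolding K_def
  by (intro closed_Int_compact closed_Int closed_Dom compact_box2 closed_Collect_conj closed_Collect_eq continuous_intros)

lemma Ax_pos: "(\<And>i j. u i j > 0) \<Longrightarrow> Ax u i j > 0" by (simp add: Ax_def add_pos_pos)
lemma Ay_pos: "(\<And>i j. u i j > 0) \<Longrightarrow> Ay u i j > 0" by (simp add: Ay_def add_pos_pos)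

lemma cont_J:
  assumes d: "\<delta> > 0"
  shows "continuous_on (K \<delta>) (\<lambda>p. J (fst p) (snd p))"
proof -
  have pos: "\<And>i j. qw1 (fst p) i j > 0" "\<And>i j. qw2 (snd p) i j > 0" "\<And>i j. 1 - qw1 (fst p) i j - qw2 (snd p) i j > 0"
    if "p \<in> K \<delta>" for p
  proof -
    have b: "\<And>i j. \<delta> \<le> qw1 (fst p) i j \<and> \<delta> \<le> qw2 (snd p) i j \<and> \<delta> \<le> 1 - qw1 (fst p) i j - qw2 (snd p) i j"
      using that unfolding K_def Dom_def by auto
    show "\<And>i j. qw1 (fst p) i j > 0" using b d by (meson less_le_trans)
    show "\<And>i j. qw2 (snd p) i j > 0" using b d by (meson less_le_trans)
    show "\<And>i j. 1 - qw1 (fst p) i j - qw2 (snd p) i j > 0" using b d by (meson less_le_trans)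
  qed
  have hz: "h \<noteq> 0" using hpos by simp
  show ?thesis
    unfolding J_def Fq_def surf_def Sf_def kappa_def Gr_def S2_def
    apply (intro continuous_intros cont_Ax cont_Ay cont_Dx cont_Dy hz)
    using pos M0pos N0pos alpha_pos[OF M0pos N0pos] beta_pos[OF M0pos N0pos]
    by (auto simp: Ax_pos Ay_pos less_imp_neq[symmetric] dest!: Ax_pos Ay_pos)
qed


lemma qw_shift: "qw1 (\<lambda>i j. w i j - c) = qw1 w" "qw2 (\<lambda>i j. w i j - c) = qw2 w"
  unfolding qw1_def qw2_def lap_shift by simp_all

lemma J_shift: "J (\<lambda>i j. w1 i j - a) (\<lambda>i j. w2 i j - b) = J w1 w2"
proof -
  have s1: "S2 N (\<lambda>i j. g1 i j * (w1 i j - a)) = S2 N (\<lambda>i j. g1 i j * w1 i j)"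
  proof -
    have "S2 N (\<lambda>i j. g1 i j * (w1 i j - a)) = S2 N (\<lambda>i j. g1 i j * w1 i j - g1 i j * a)"
      by (rule S2_cong) (simp add: algebra_simps)
    then show ?thesis by (simp add: S2_diff S2_multc S2_g)
  qed
  have s2: "S2 N (\<lambda>i j. g2 i j * (w2 i j - b)) = S2 N (\<lambda>i j. g2 i j * w2 i j)"
  proof -
    have "S2 N (\<lambda>i j. g2 i j * (w2 i j - b)) = S2 N (\<lambda>i j. g2 i j * w2 i j - g2 i j * b)"
      by (rule S2_cong) (simp add: algebra_simps)
    then show ?thesis by (simp add: S2_diff S2_multc S2_g)
  qed
  show ?thesis unfolding J_def qw_shift Gr_const_shift s1 s2 ..
qed

lemma Dom_shift:
  assumes "p \<in> Dom \<delta>"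
  shows "((\<lambda>i j. fst p i j - fst p 1 1), (\<lambda>i j. snd p i j - snd p 1 1)) \<in> Dom \<delta>"
  using assms unfolding Dom_def by (auto simp: qw_shift intro: per_diff per_const)

lemma exists_min:
  assumes d: "\<delta> > 0" and z: "((\<lambda>i j. 0), (\<lambda>i j. 0)) \<in> Dom \<delta>"
  shows "\<exists>p\<in>K \<delta>. \<forall>q\<in>Dom \<delta>. J (fst p) (snd p) \<le> J (fst q) (snd q)"
proof -
  have zK: "((\<lambda>i j. 0), (\<lambda>i j. 0)) \<in> K \<delta>"
    using z unfolding K_def Rb_def by simp
  obtain p where pK: "p \<in> K \<delta>" and pm: "\<And>q. q \<in> K \<delta> \<Longrightarrow> J (fst p) (snd p) \<le> J (fst q) (snd q)"
    using continuous_attains_inf[OF compact_K _ cont_J[OF d]] zK by blast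
  show ?thesis
  proof (intro bexI[OF _ pK] ballI)
    fix q assume q: "q \<in> Dom \<delta>"
    let ?q' = "((\<lambda>i j. fst q i j - fst q 1 1), (\<lambda>i j. snd q i j - snd q 1 1))"
    have q'D: "?q' \<in> Dom \<delta>" by (rule Dom_shift[OF q])
    have "?q' \<in> K \<delta>" unfolding K_def using q'D Dom_box[OF d q'D] by simp
    then have "J (fst p) (snd p) \<le> J (fst ?q') (snd ?q')" by (rule pm)
    also have "\<dots> = J (fst q) (snd q)" by (simp add: J_shift)
    finally show "J (fst p) (snd p) \<le> J (fst q) (snd q)" .
  qed
qed

end


context setting
begin

definition comp :: "nat \<Rightarrow> grid \<Rightarrow> grid \<Rightarrow> int \<Rightarrow> int \<Rightarrow> real" where
  "comp k q1 q2 i j = (if k = 1 then q1 i j else if k = 2 then q2 i j else 1 - q1 i j - q2 i j)"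
definition coef :: "nat \<Rightarrow> real" where
  "coef k = (if k = 1 then 1 / M0 P else if k = 2 then 1 / N0 P else 1)"
definition kap :: "nat \<Rightarrow> real" where
  "kap k = (if k = 1 then alpha P / M0 P else if k = 2 then beta P / N0 P else 1)"
definition U :: "nat \<Rightarrow> real \<Rightarrow> real" where
  "U k t = coef k * ln (kap k * t) + coef k"
definition ell :: "nat \<Rightarrow> grid \<Rightarrow> grid \<Rightarrow> int \<Rightarrow> int \<Rightarrow> real" where
  "ell k q1 q2 i j = U k (comp k q1 q2 i j)"

lemma coef_pos: "coef k > 0" unfolding coef_def using M0pos N0pos by auto
lemma kap_pos: "kap k > 0" unfolding kap_def using M0pos N0pos alpha_pos[OF M0pos N0pos] beta_pos[OF M0pos N0pos] by auto

lemma U_mono: "0 < s \<Longrightarrow> s \<le> t \<Longrightarrow> U k s \<le> U k t"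
  unfolding U_def using coef_pos[of k] kap_pos[of k] by (simp add: mult_left_mono)

lemma U_diff: "0 < s \<Longrightarrow> 0 < t \<Longrightarrow> U k t - U k s = coef k * (ln t - ln s)"
  unfolding U_def using kap_pos[of k] by (simp add: ln_mult algebra_simps)

definition R1 :: "grid \<Rightarrow> grid \<Rightarrow> grid \<Rightarrow> grid \<Rightarrow> grid" where
  "R1 q1 q2 w ga = (\<lambda>i j. (eps1 P)\<^sup>2 * Top h q1 i j - (eps3 P)\<^sup>2 * Top h (\<lambda>i j. 1 - q1 i j - q2 i j) i j
     + B1 i j - A1 * dt * lap h (\<lambda>i j. q1 i j - p1c i j) i j - c1 * w i j + ga i j)"
definition R2 :: "grid \<Rightarrow> grid \<Rightarrow> grid \<Rightarrow> grid \<Rightarrow> grid" where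
  "R2 q1 q2 w ga = (\<lambda>i j. (eps2 P)\<^sup>2 * Top h q2 i j - (eps3 P)\<^sup>2 * Top h (\<lambda>i j. 1 - q1 i j - q2 i j) i j
     + B2 i j - A2 * dt * lap h (\<lambda>i j. q2 i j - p2c i j) i j - c2 * w i j + ga i j)"

lemma decomp1: "mu1 q1 q2 i j - c1 * w i j + ga i j = ell 1 q1 q2 i j - ell 3 q1 q2 i j + R1 q1 q2 w ga i j"
  unfolding mu1_def dG1_def dSa_def R1_def ell_def U_def comp_def coef_def kap_def B1_def
  by (simp add: algebra_simps)
lemma decomp2: "mu2 q1 q2 i j - c2 * w i j + ga i j = ell 2 q1 q2 i j - ell 3 q1 q2 i j + R2 q1 q2 w ga i j"
  unfolding mu2_def dG2_def dSb_def R2_def ell_def U_def comp_def coef_def kap_def B2_def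
  by (simp add: algebra_simps)

lemma R_bound:
  assumes pos: "\<And>i j. 0 < q1 i j \<and> 0 < q2 i j \<and> q1 i j + q2 i j < 1"
    and w1: "\<And>i j. \<bar>w1 i j\<bar> \<le> Rb" and w2: "\<And>i j. \<bar>w2 i j\<bar> \<le> Rb"
    and ga1: "\<And>i j. \<bar>ga1 i j\<bar> \<le> Mg" and ga2: "\<And>i j. \<bar>ga2 i j\<bar> \<le> Mg"
    and b1: "\<And>i j. \<bar>B1 i j\<bar> \<le> MB" and b2: "\<And>i j. \<bar>B2 i j\<bar> \<le> MB"
  shows "\<bar>R1 q1 q2 w1 ga1 i j\<bar> \<le> ((eps1 P)\<^sup>2 + (eps2 P)\<^sup>2 + 2 * (eps3 P)\<^sup>2) / h\<^sup>2 + MB + (A1 + A2) * dt * (8 / h\<^sup>2) + (c1 + c2) * Rb + Mg"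
    and "\<bar>R2 q1 q2 w2 ga2 i j\<bar> \<le> ((eps1 P)\<^sup>2 + (eps2 P)\<^sup>2 + 2 * (eps3 P)\<^sup>2) / h\<^sup>2 + MB + (A1 + A2) * dt * (8 / h\<^sup>2) + (c1 + c2) * Rb + Mg"
proof -
  have t1: "\<bar>Top h q1 i j\<bar> \<le> 1 / h\<^sup>2" using Top_bound[OF _ hpos] pos by blast
  have t2: "\<bar>Top h q2 i j\<bar> \<le> 1 / h\<^sup>2" using Top_bound[OF _ hpos] pos by blast
  have t3: "\<bar>Top h (\<lambda>i j. 1 - q1 i j - q2 i j) i j\<bar> \<le> 1 / h\<^sup>2"
  proof -
    have "\<And>i j. 0 < 1 - q1 i j - q2 i j" using pos by (smt (verit))
    then show ?thesis by (rule Top_bound[OF _ hpos])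
  qed
  have e1: "\<bar>q1 i j - p1c i j\<bar> \<le> 1" for i j using pos[of i j] pc_range[of i j] by (simp add: abs_le_iff)
  have e2: "\<bar>q2 i j - p2c i j\<bar> \<le> 1" for i j using pos[of i j] pc_range[of i j] by (simp add: abs_le_iff)
  have l1: "\<bar>lap h (\<lambda>i j. q1 i j - p1c i j) i j\<bar> \<le> 8 / h\<^sup>2" using lap_bound[of _ 1, OF e1 hpos] by simp
  have l2: "\<bar>lap h (\<lambda>i j. q2 i j - p2c i j) i j\<bar> \<le> 8 / h\<^sup>2" using lap_bound[of _ 1, OF e2 hpos] by simp
  have c1p: "c1 > 0" and c2p: "c2 > 0" unfolding c1_def c2_def using vm dtpos unfolding valid_model_def by auto
  have E: "0 \<le> (eps1 P)\<^sup>2" "0 \<le> (eps2 P)\<^sup>2" "0 \<le> (eps3 P)\<^sup>2" by simp_all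
  have Rb0: "0 \<le> Rb" unfolding Rb_def by simp
  have aa1: "\<bar>(eps1 P)\<^sup>2 * Top h q1 i j\<bar> \<le> (eps1 P)\<^sup>2 / h\<^sup>2"
    using mult_left_mono[OF t1 E(1)] by (simp add: abs_mult)
  have aa2: "\<bar>(eps2 P)\<^sup>2 * Top h q2 i j\<bar> \<le> (eps2 P)\<^sup>2 / h\<^sup>2"
    using mult_left_mono[OF t2 E(2)] by (simp add: abs_mult)
  have aa3: "\<bar>(eps3 P)\<^sup>2 * Top h (\<lambda>i j. 1 - q1 i j - q2 i j) i j\<bar> \<le> (eps3 P)\<^sup>2 / h\<^sup>2"
    using mult_left_mono[OF t3 E(3)] by (simp add: abs_mult)
  have AA1: "\<bar>A1 * dt * lap h (\<lambda>i j. q1 i j - p1c i j) i j\<bar> \<le> A1 * dt * (8 / h\<^sup>2)"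
    using mult_left_mono[OF l1, of "A1 * dt"] A1 dtpos by (simp add: abs_mult)
  have AA2: "\<bar>A2 * dt * lap h (\<lambda>i j. q2 i j - p2c i j) i j\<bar> \<le> A2 * dt * (8 / h\<^sup>2)"
    using mult_left_mono[OF l2, of "A2 * dt"] A2 dtpos by (simp add: abs_mult)
  have W1: "\<bar>c1 * w1 i j\<bar> \<le> c1 * Rb" using mult_left_mono[OF w1, of c1] c1p by (simp add: abs_mult)
  have W2: "\<bar>c2 * w2 i j\<bar> \<le> c2 * Rb" using mult_left_mono[OF w2, of c2] c2p by (simp add: abs_mult)
  have pp: "0 \<le> A1 * dt * (8 / h\<^sup>2)" "0 \<le> A2 * dt * (8 / h\<^sup>2)" "0 \<le> c1 * Rb" "0 \<le> c2 * Rb"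
    "0 \<le> (eps1 P)\<^sup>2 / h\<^sup>2" "0 \<le> (eps2 P)\<^sup>2 / h\<^sup>2" "0 \<le> (eps3 P)\<^sup>2 / h\<^sup>2"
    using A1 A2 dtpos c1p c2p Rb0 by simp_all
  have dist: "((eps1 P)\<^sup>2 + (eps2 P)\<^sup>2 + 2 * (eps3 P)\<^sup>2) / h\<^sup>2 + MB + (A1 + A2) * dt * (8 / h\<^sup>2) + (c1 + c2) * Rb + Mg
     = (eps1 P)\<^sup>2 / h\<^sup>2 + (eps2 P)\<^sup>2 / h\<^sup>2 + (eps3 P)\<^sup>2 / h\<^sup>2 + (eps3 P)\<^sup>2 / h\<^sup>2 + MB
       + A1 * dt * (8 / h\<^sup>2) + A2 * dt * (8 / h\<^sup>2) + c1 * Rb + c2 * Rb + Mg"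
    by (simp add: algebra_simps add_divide_distrib)
  show "\<bar>R1 q1 q2 w1 ga1 i j\<bar> \<le> ((eps1 P)\<^sup>2 + (eps2 P)\<^sup>2 + 2 * (eps3 P)\<^sup>2) / h\<^sup>2 + MB + (A1 + A2) * dt * (8 / h\<^sup>2) + (c1 + c2) * Rb + Mg"
  proof -
    have r: "R1 q1 q2 w1 ga1 i j = (eps1 P)\<^sup>2 * Top h q1 i j - (eps3 P)\<^sup>2 * Top h (\<lambda>i j. 1 - q1 i j - q2 i j) i j
     + B1 i j - A1 * dt * lap h (\<lambda>i j. q1 i j - p1c i j) i j - c1 * w1 i j + ga1 i j" by (simp add: R1_def)
    show ?thesis unfolding dist r using aa1 aa3 AA1 W1 b1[of i j] ga1[of i j] pp unfolding abs_le_iff by linarith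
  qed
  show "\<bar>R2 q1 q2 w2 ga2 i j\<bar> \<le> ((eps1 P)\<^sup>2 + (eps2 P)\<^sup>2 + 2 * (eps3 P)\<^sup>2) / h\<^sup>2 + MB + (A1 + A2) * dt * (8 / h\<^sup>2) + (c1 + c2) * Rb + Mg"
  proof -
    have r: "R2 q1 q2 w2 ga2 i j = (eps2 P)\<^sup>2 * Top h q2 i j - (eps3 P)\<^sup>2 * Top h (\<lambda>i j. 1 - q1 i j - q2 i j) i j
     + B2 i j - A2 * dt * lap h (\<lambda>i j. q2 i j - p2c i j) i j - c2 * w2 i j + ga2 i j" by (simp add: R2_def)
    show ?thesis unfolding dist r using aa2 aa3 AA2 W2 b2[of i j] ga2[of i j] pp unfolding abs_le_iff by linarith
  qed
qed

end


lemma lap_scale: "lap h (\<lambda>i j. c * V i j) i j = c * lap h V i j"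
  unfolding lap_def dx_def dy_def Dx_def Dy_def by (simp add: algebra_simps diff_divide_distrib[symmetric] add_divide_distrib[symmetric])

lemma ind_01: "ind N x y i j = 0 \<or> ind N x y i j = 1"
  unfolding ind_def by simp

lemma ind_val: "periodic N F \<Longrightarrow> ind N x y i j = 1 \<Longrightarrow> F i j = F x y"
  unfolding ind_def by (metis per_rp zero_neq_one)

lemma S2_ind1: "N \<ge> 1 \<Longrightarrow> S2 N (ind N x y) = 1"
  using S2_ind_left[of N "\<lambda>i j. 1" x y] by (simp add: per_const)

context setting
begin

lemma S2_comp: "periodic N w1 \<Longrightarrow> periodic N w2 \<Longrightarrow> S2 N (comp k (qw1 w1) (qw2 w2)) = S2 N (comp k p1c p2c)"
proof -
  assume p: "periodic N w1" "periodic N w2"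
  have l: "S2 N (lap h w1) = 0" "S2 N (lap h w2) = 0" using S2_lap p by auto
  have "S2 N (comp k (qw1 w1) (qw2 w2)) = S2 N (\<lambda>i j. comp k p1c p2c i j
      + (if k = 1 then lap h w1 i j else if k = 2 then lap h w2 i j else - lap h w1 i j - lap h w2 i j))"
    by (rule S2_cong) (simp add: comp_def qw1_def qw2_def)
  also have "\<dots> = S2 N (comp k p1c p2c) + S2 N (\<lambda>i j. if k = 1 then lap h w1 i j else if k = 2 then lap h w2 i j else - lap h w1 i j - lap h w2 i j)"
    by (rule S2_add)
  also have "S2 N (\<lambda>i j. if k = 1 then lap h w1 i j else if k = 2 then lap h w2 i j else - lap h w1 i j - lap h w2 i j) = 0"
    using l by (cases "k = 1"; cases "k = 2") (simp_all add: S2_diff S2_minus)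
  finally show ?thesis by simp
qed

lemma Dom_comp: "p \<in> Dom \<delta> \<longleftrightarrow> periodic N (fst p) \<and> periodic N (snd p) \<and>
   (\<forall>k\<in>{1,2,3}. \<forall>i j. \<delta> \<le> comp k (qw1 (fst p)) (qw2 (snd p)) i j)"
  unfolding Dom_def comp_def by auto

definition sig :: "nat \<Rightarrow> nat \<Rightarrow> nat \<Rightarrow> real" where
  "sig a b k = (if k = a then 1 else 0) - (if k = b then 1 else 0)"

lemma sig3: "a \<in> {1,2,3} \<Longrightarrow> b \<in> {1,2,3} \<Longrightarrow> a \<noteq> b \<Longrightarrow> sig a b 3 = - sig a b 1 - sig a b 2"
  unfolding sig_def by auto

lemma comp_pert:
  assumes "a \<in> {1,2,3}" "b \<in> {1,2,3}" "a \<noteq> b" "k \<in> {1,2,3}"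
  shows "comp k (qw1 (\<lambda>i j. w1 i j + s * (sig a b 1 * V i j))) (qw2 (\<lambda>i j. w2 i j + s * (sig a b 2 * V i j))) i j
    = comp k (qw1 w1) (qw2 w2) i j + s * sig a b k * lap h V i j"
  using assms unfolding comp_def qw1_lin qw2_lin lap_scale sig_def by (auto simp: algebra_simps)

lemma sig_ell:
  assumes "a \<in> {1,2,3}" "b \<in> {1,2,3}" "a \<noteq> b"
  shows "sig a b 1 * (ell 1 q1 q2 i j - ell 3 q1 q2 i j) + sig a b 2 * (ell 2 q1 q2 i j - ell 3 q1 q2 i j)
     = ell a q1 q2 i j - ell b q1 q2 i j"
  using assms unfolding sig_def by auto

lemma sig_abs: "\<bar>sig a b k\<bar> \<le> 1" unfolding sig_def by auto

lemma comp_sum: "comp 1 q1 q2 i j + comp 2 q1 q2 i j + comp 3 q1 q2 i j = 1"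
  unfolding comp_def by simp

lemma choose_b:
  assumes "a \<in> {1,2,3}" "comp a q1 q2 i j \<le> 1/2"
  shows "\<exists>b\<in>{1,2,3}. b \<noteq> a \<and> 1/4 \<le> comp b q1 q2 i j"
proof -
  have s: "comp 1 q1 q2 i j + comp 2 q1 q2 i j + comp 3 q1 q2 i j = 1" by (rule comp_sum)
  show ?thesis
  proof (cases "a = 1")
    case True then show ?thesis using assms s by (cases "1/4 \<le> comp 2 q1 q2 i j") (auto intro: bexI[of _ 2] bexI[of _ 3])
  next
    case F1: False
    show ?thesis
    proof (cases "a = 2")
      case True then show ?thesis using assms s by (cases "1/4 \<le> comp 1 q1 q2 i j") (auto intro: bexI[of _ 1] bexI[of _ 3])
    next
      case False
      then have "a = 3" using F1 assms by auto
      then show ?thesis using assms s by (cases "1/4 \<le> comp 1 q1 q2 i j") (auto intro: bexI[of _ 1] bexI[of _ 2])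
    qed
  qed
qed


lemma per_comp: "periodic N q1 \<Longrightarrow> periodic N q2 \<Longrightarrow> periodic N (comp k q1 q2)"
  unfolding comp_def by (rule perI) (simp_all add: per_x per_y)

lemma S2_E:
  assumes "periodic N F"
  shows "S2 N (\<lambda>i j. F i j * (c * (ind N x0 y0 i j - ind N x1 y1 i j))) = c * (F x0 y0 - F x1 y1)"
proof -
  have "S2 N (\<lambda>i j. F i j * (c * (ind N x0 y0 i j - ind N x1 y1 i j)))
      = S2 N (\<lambda>i j. c * (F i j * ind N x0 y0 i j) - c * (F i j * ind N x1 y1 i j))"
    by (rule S2_cong) (simp add: algebra_simps)
  also have "\<dots> = c * S2 N (\<lambda>i j. F i j * ind N x0 y0 i j) - c * S2 N (\<lambda>i j. F i j * ind N x1 y1 i j)"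
    by (simp only: S2_diff S2_cmult)
  also have "\<dots> = c * (F x0 y0 - F x1 y1)" using S2_ind[OF N1 assms] by (simp add: algebra_simps)
  finally show ?thesis .
qed

lemma interior:
  assumes d0: "0 < \<delta>" and d8: "\<delta> \<le> 1/8" and dm: "\<delta> < mlow"
    and ml: "\<And>k. k \<in> {1,2,3} \<Longrightarrow> mlow \<le> S2 N (comp k p1c p2c) / (real N * real N)"
    and pg1: "periodic N ga1" and pg2: "periodic N ga2"
    and lg1: "\<And>i j. lap h ga1 i j = g1 i j" and lg2: "\<And>i j. lap h ga2 i j = g2 i j"
    and Rb1: "\<And>i j. \<bar>R1 (qw1 w1) (qw2 w2) w1 ga1 i j\<bar> \<le> Bd"
    and Rb2: "\<And>i j. \<bar>R2 (qw1 w1) (qw2 w2) w2 ga2 i j\<bar> \<le> Bd"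
    and key: "\<And>a b. coef a * (ln \<delta> - ln mlow) + coef b * ln 4 + 4 * Bd < 0"
    and wD: "(w1, w2) \<in> Dom \<delta>"
    and wmin: "\<forall>q\<in>Dom \<delta>. J w1 w2 \<le> J (fst q) (snd q)"
  shows "\<forall>k\<in>{1,2,3}. \<forall>i j. \<delta> < comp k (qw1 w1) (qw2 w2) i j"
proof (rule ccontr)
  let ?Q1 = "qw1 w1" and ?Q2 = "qw2 w2"
  assume "\<not> ?thesis"
  then obtain a i0 j0 where a: "a \<in> {1,2,3}" and ax0: "comp a ?Q1 ?Q2 i0 j0 \<le> \<delta>" by (auto simp: not_less)
  have pw: "periodic N w1" "periodic N w2" and Qge: "\<And>k i j. k \<in> {1,2,3} \<Longrightarrow> \<delta> \<le> comp k ?Q1 ?Q2 i j"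
    using wD unfolding Dom_comp by auto
  have pQ: "periodic N ?Q1" "periodic N ?Q2" using per_qw pw by auto
  have pos: "\<And>i j. 0 < ?Q1 i j \<and> 0 < ?Q2 i j \<and> ?Q1 i j + ?Q2 i j < 1"
  proof -
    fix i j
    have "\<delta> \<le> comp 1 ?Q1 ?Q2 i j" "\<delta> \<le> comp 2 ?Q1 ?Q2 i j" "\<delta> \<le> comp 3 ?Q1 ?Q2 i j" using Qge by auto
    then show "0 < ?Q1 i j \<and> 0 < ?Q2 i j \<and> ?Q1 i j + ?Q2 i j < 1" using d0 unfolding comp_def by auto
  qed
  have cpos: "\<And>k i j. k \<in> {1,2,3} \<Longrightarrow> 0 < comp k ?Q1 ?Q2 i j" using Qge d0 by (meson less_le_trans)
  have cle1: "\<And>k i j. k \<in> {1,2,3} \<Longrightarrow> comp k ?Q1 ?Q2 i j \<le> 1"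
    using pos unfolding comp_def by (auto simp: less_imp_le) (smt (verit) pos)+
  obtain b where b: "b \<in> {1,2,3}" "b \<noteq> a" and bx0: "1/4 \<le> comp b ?Q1 ?Q2 i0 j0"
    using choose_b[OF a, of ?Q1 ?Q2 i0 j0] ax0 d8 by auto
  have ab: "a \<noteq> b" using b by auto
  obtain i1 j1 where x1: "S2 N (comp a ?Q1 ?Q2) / (real N * real N) \<le> comp a ?Q1 ?Q2 i1 j1"
    using exists_ge_mean[OF N1, of "comp a ?Q1 ?Q2"] by auto
  have ax1: "mlow \<le> comp a ?Q1 ?Q2 i1 j1" using x1 ml[OF a] S2_comp[OF pw] by simp
  have pC: "\<And>k. periodic N (comp k ?Q1 ?Q2)" using per_comp pQ by auto
  have neq: "\<not> (ind N i0 j0 i j = 1 \<and> ind N i1 j1 i j = 1)" for i j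
  proof
    assume "ind N i0 j0 i j = 1 \<and> ind N i1 j1 i j = 1"
    then have "comp a ?Q1 ?Q2 i j = comp a ?Q1 ?Q2 i0 j0" "comp a ?Q1 ?Q2 i j = comp a ?Q1 ?Q2 i1 j1"
      using ind_val[OF pC] by blast+
    then show False using ax0 ax1 dm by simp
  qed
  define E where "E = (\<lambda>i j. ind N i0 j0 i j - ind N i1 j1 i j)"
  have pE: "periodic N E" unfolding E_def by (intro per_diff per_ind)
  have SE: "S2 N E = 0" unfolding E_def S2_diff using S2_ind1[OF N1] by simp
  obtain V where pV: "periodic N V" and lV: "\<And>i j. lap h V i j = E i j"
    using poisson[OF hpos N1 pE SE] by blast
  let ?v1 = "\<lambda>i j. sig a b 1 * V i j" and ?v2 = "\<lambda>i j. sig a b 2 * V i j"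
  have pv: "periodic N ?v1" "periodic N ?v2" using pV by (auto intro: per_cmult)
  let ?G1 = "\<lambda>i j. mu1 ?Q1 ?Q2 i j - c1 * w1 i j + ga1 i j"
  let ?G2 = "\<lambda>i j. mu2 ?Q1 ?Q2 i j - c2 * w2 i j + ga2 i j"
  have pG: "periodic N ?G1" "periodic N ?G2"
    using per_mu[OF pQ] pw pg1 pg2 by (auto intro!: per_add per_diff per_cmult)
  define D where "D = S2 N (\<lambda>i j. ?G1 i j * lap h ?v1 i j) + S2 N (\<lambda>i j. ?G2 i j * lap h ?v2 i j)"
  have deriv: "((\<lambda>s. J (\<lambda>i j. w1 i j + s * ?v1 i j) (\<lambda>i j. w2 i j + s * ?v2 i j)) has_real_derivative D) (at 0)"
    unfolding D_def by (rule J_deriv_B[OF pw pv pos pg1 pg2 lg1 lg2])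
  have D1: "D = sig a b 1 * (?G1 i0 j0 - ?G1 i1 j1) + sig a b 2 * (?G2 i0 j0 - ?G2 i1 j1)"
    unfolding D_def lap_scale lV E_def using S2_E[OF pG(1)] S2_E[OF pG(2)] by simp
  let ?L = "\<lambda>i j. ell a ?Q1 ?Q2 i j - ell b ?Q1 ?Q2 i j"
  let ?Rp = "sig a b 1 * (R1 ?Q1 ?Q2 w1 ga1 i0 j0 - R1 ?Q1 ?Q2 w1 ga1 i1 j1) + sig a b 2 * (R2 ?Q1 ?Q2 w2 ga2 i0 j0 - R2 ?Q1 ?Q2 w2 ga2 i1 j1)"
  have D2: "D = ?L i0 j0 - ?L i1 j1 + ?Rp"
  proof -
    have "D = (sig a b 1 * (ell 1 ?Q1 ?Q2 i0 j0 - ell 3 ?Q1 ?Q2 i0 j0) + sig a b 2 * (ell 2 ?Q1 ?Q2 i0 j0 - ell 3 ?Q1 ?Q2 i0 j0))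
       - (sig a b 1 * (ell 1 ?Q1 ?Q2 i1 j1 - ell 3 ?Q1 ?Q2 i1 j1) + sig a b 2 * (ell 2 ?Q1 ?Q2 i1 j1 - ell 3 ?Q1 ?Q2 i1 j1)) + ?Rp"
      unfolding D1 decomp1 decomp2 by (simp add: algebra_simps)
    then show ?thesis unfolding sig_ell[OF a b(1) ab] .
  qed
  have Rp: "?Rp \<le> 4 * Bd"
  proof -
    have s1: "\<bar>sig a b 1\<bar> \<le> 1" and s2: "\<bar>sig a b 2\<bar> \<le> 1" by (rule sig_abs)+
    have r1: "\<bar>R1 ?Q1 ?Q2 w1 ga1 i0 j0 - R1 ?Q1 ?Q2 w1 ga1 i1 j1\<bar> \<le> 2 * Bd"
      using Rb1[of i0 j0] Rb1[of i1 j1] by linarith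
    have r2: "\<bar>R2 ?Q1 ?Q2 w2 ga2 i0 j0 - R2 ?Q1 ?Q2 w2 ga2 i1 j1\<bar> \<le> 2 * Bd"
      using Rb2[of i0 j0] Rb2[of i1 j1] by linarith
    have "\<bar>sig a b 1 * (R1 ?Q1 ?Q2 w1 ga1 i0 j0 - R1 ?Q1 ?Q2 w1 ga1 i1 j1)\<bar> \<le> 1 * (2 * Bd)"
      unfolding abs_mult by (rule mult_mono[OF s1 r1]) simp_all
    moreover have "\<bar>sig a b 2 * (R2 ?Q1 ?Q2 w2 ga2 i0 j0 - R2 ?Q1 ?Q2 w2 ga2 i1 j1)\<bar> \<le> 1 * (2 * Bd)"
      unfolding abs_mult by (rule mult_mono[OF s2 r2]) simp_all
    ultimately show ?thesis by linarith
  qed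
  have m0: "0 < mlow" using d0 dm by simp
  have e1: "ell a ?Q1 ?Q2 i0 j0 \<le> U a \<delta>" unfolding ell_def using U_mono cpos[OF a] ax0 by blast
  have e2: "U b (1/4) \<le> ell b ?Q1 ?Q2 i0 j0" unfolding ell_def using U_mono bx0 by simp
  have e3: "U a mlow \<le> ell a ?Q1 ?Q2 i1 j1" unfolding ell_def using U_mono m0 ax1 by blast
  have e4: "ell b ?Q1 ?Q2 i1 j1 \<le> U b 1" unfolding ell_def using U_mono cpos[OF b(1)] cle1[OF b(1)] by blast
  have u1: "U a \<delta> - U a mlow = coef a * (ln \<delta> - ln mlow)" using U_diff[OF m0 d0] by simp
  have u2: "U b 1 - U b (1/4) = coef b * ln 4" using U_diff[of "1/4" 1 b] by (simp add: ln_div)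
  have Dneg: "D < 0" using D2 Rp e1 e2 e3 e4 u1 u2 key[of a b] by linarith
  obtain dd where dd: "dd > 0" and ddp: "\<And>s. s > 0 \<Longrightarrow> s < dd \<Longrightarrow>
      J (\<lambda>i j. w1 i j + s * ?v1 i j) (\<lambda>i j. w2 i j + s * ?v2 i j) < J (\<lambda>i j. w1 i j + 0 * ?v1 i j) (\<lambda>i j. w2 i j + 0 * ?v2 i j)"
    using DERIV_neg_dec_right[OF deriv Dneg] by auto
  define s where "s = min dd (min (1/4 - \<delta>) (mlow - \<delta>)) / 2"
  have s0: "0 < s" "s < dd" "s < 1/4 - \<delta>" "s < mlow - \<delta>" unfolding s_def using dd d8 dm by auto
  have inD: "((\<lambda>i j. w1 i j + s * ?v1 i j), (\<lambda>i j. w2 i j + s * ?v2 i j)) \<in> Dom \<delta>"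
    unfolding Dom_comp fst_conv snd_conv
  proof (intro conjI ballI allI)
    show "periodic N (\<lambda>i j. w1 i j + s * ?v1 i j)" using pw pv pV by (intro per_add per_cmult)
    show "periodic N (\<lambda>i j. w2 i j + s * ?v2 i j)" using pw pv pV by (intro per_add per_cmult)
    fix k :: nat and i j :: int assume k: "k \<in> {1,2,3}"
    have eq: "comp k (qw1 (\<lambda>i j. w1 i j + s * ?v1 i j)) (qw2 (\<lambda>i j. w2 i j + s * ?v2 i j)) i j
       = comp k ?Q1 ?Q2 i j + s * sig a b k * E i j"
      using comp_pert[OF a b(1) ab k, of w1 s V w2 i j] lV by simp
    have base: "\<delta> \<le> comp k ?Q1 ?Q2 i j" by (rule Qge[OF k])
    consider (z) "ind N i0 j0 i j = 0" "ind N i1 j1 i j = 0" | (o) "ind N i0 j0 i j = 1" "ind N i1 j1 i j = 0"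
      | (t) "ind N i0 j0 i j = 0" "ind N i1 j1 i j = 1"
      using ind_01[of N i0 j0 i j] ind_01[of N i1 j1 i j] neq[of i j] by auto
    then show "\<delta> \<le> comp k (qw1 (\<lambda>i j. w1 i j + s * ?v1 i j)) (qw2 (\<lambda>i j. w2 i j + s * ?v2 i j)) i j"
    proof cases
      case z then show ?thesis unfolding eq E_def using base by simp
    next
      case o
      have cv: "comp k ?Q1 ?Q2 i j = comp k ?Q1 ?Q2 i0 j0" using ind_val[OF pC o(1)] .
      show ?thesis
      proof (cases "k = b")
        case True
        then have "sig a b k = -1" using b unfolding sig_def by simp
        then show ?thesis unfolding eq E_def using o cv bx0 s0 True by simp
      next
        case False
        then have "sig a b k \<ge> 0" unfolding sig_def by simp
        then have "0 \<le> s * sig a b k" using s0 by simp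
        then show ?thesis unfolding eq E_def using o base by simp
      qed
    next
      case t
      have cv: "comp k ?Q1 ?Q2 i j = comp k ?Q1 ?Q2 i1 j1" using ind_val[OF pC t(2)] .
      show ?thesis
      proof (cases "k = a")
        case True
        then have "sig a b k = 1" using b unfolding sig_def by simp
        then show ?thesis unfolding eq E_def using t cv ax1 s0 True by simp
      next
        case False
        then have "sig a b k \<le> 0" unfolding sig_def by simp
        then have "s * sig a b k \<le> 0" using s0 by (simp add: mult_nonneg_nonpos)
        then show ?thesis unfolding eq E_def using t base by simp
      qed
    qed
  qed
  have "J w1 w2 \<le> J (\<lambda>i j. w1 i j + s * ?v1 i j) (\<lambda>i j. w2 i j + s * ?v2 i j)"
    using wmin inD by fastforce
  moreover have "J (\<lambda>i j. w1 i j + s * ?v1 i j) (\<lambda>i j. w2 i j + s * ?v2 i j) < J w1 w2"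
    using ddp[OF s0(1) s0(2)] by simp
  ultimately show False by simp
qed

end


context setting
begin

lemma EL_step:
  assumes wD: "(w1, w2) \<in> Dom \<delta>" and d0: "0 < \<delta>"
    and strict: "\<forall>k\<in>{1,2,3}. \<forall>i j. \<delta> < comp k (qw1 w1) (qw2 w2) i j"
    and wmin: "\<forall>q\<in>Dom \<delta>. J w1 w2 \<le> J (fst q) (snd q)"
    and a: "a \<in> {1::nat,2}"
  shows "sig a 3 1 * (lap h (mu1 (qw1 w1) (qw2 w2)) x y - c1 * lap h w1 x y + g1 x y)
       + sig a 3 2 * (lap h (mu2 (qw1 w1) (qw2 w2)) x y - c2 * lap h w2 x y + g2 x y) = 0"
proof -
  let ?Q1 = "qw1 w1" and ?Q2 = "qw2 w2"
  have pw: "periodic N w1" "periodic N w2" using wD unfolding Dom_def by auto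
  have pQ: "periodic N ?Q1" "periodic N ?Q2" using per_qw pw by auto
  have pC: "\<And>k. periodic N (comp k ?Q1 ?Q2)" using per_comp pQ by auto
  have lb: "\<exists>e>0. \<forall>i j. e \<le> comp k ?Q1 ?Q2 i j - \<delta>" if k: "k \<in> {1,2,3}" for k
  proof -
    have pk: "periodic N (\<lambda>i j. comp k ?Q1 ?Q2 i j - \<delta>)" by (rule per_diff[OF pC per_const])
    have "\<And>i j. 0 < comp k ?Q1 ?Q2 i j - \<delta>" using strict k by auto
    then show ?thesis using per_pos_lb[OF N1 pk] by auto
  qed
  obtain e1 where e1: "e1 > 0" "\<And>i j. e1 \<le> comp 1 ?Q1 ?Q2 i j - \<delta>" using lb[of 1] by auto
  obtain e2 where e2: "e2 > 0" "\<And>i j. e2 \<le> comp 2 ?Q1 ?Q2 i j - \<delta>" using lb[of 2] by auto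
  obtain e3 where e3: "e3 > 0" "\<And>i j. e3 \<le> comp 3 ?Q1 ?Q2 i j - \<delta>" using lb[of 3] by auto
  define e where "e = min e1 (min e2 e3)"
  have e0: "e > 0" unfolding e_def using e1 e2 e3 by simp
  have ee: "e \<le> e1" "e \<le> e2" "e \<le> e3" unfolding e_def by auto
  have slack: "\<delta> + e \<le> comp k ?Q1 ?Q2 i j" if k: "k \<in> {1,2,3}" for k i j
  proof -
    consider "k = 1" | "k = 2" | "k = 3" using k by auto
    then show ?thesis
    proof cases
      case 1 then show ?thesis using e1(2)[of i j] ee by simp
    next
      case 2 then show ?thesis using e2(2)[of i j] ee by simp
    next
      case 3 then show ?thesis using e3(2)[of i j] ee by simp
    qed
  qed
  have pos: "\<And>i j. 0 < ?Q1 i j \<and> 0 < ?Q2 i j \<and> ?Q1 i j + ?Q2 i j < 1"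
  proof -
    fix i j
    have "\<delta> < comp 1 ?Q1 ?Q2 i j" "\<delta> < comp 2 ?Q1 ?Q2 i j" "\<delta> < comp 3 ?Q1 ?Q2 i j" using strict by auto
    then show "0 < ?Q1 i j \<and> 0 < ?Q2 i j \<and> ?Q1 i j + ?Q2 i j < 1" using d0 unfolding comp_def by auto
  qed
  let ?V = "ind N x y"
  have pV: "periodic N ?V" by (rule per_ind)
  have Vb: "\<And>i j. \<bar>?V i j\<bar> \<le> 1" unfolding ind_def by simp
  have lVb: "\<And>i j. \<bar>lap h ?V i j\<bar> \<le> 8 / h\<^sup>2" using lap_bound[OF Vb hpos] by simp
  have a3: "a \<in> {1,2,3}" "(3::nat) \<in> {1,2,3}" "a \<noteq> 3" using a by auto
  let ?v1 = "\<lambda>i j. sig a 3 1 * ?V i j" and ?v2 = "\<lambda>i j. sig a 3 2 * ?V i j"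
  have pv: "periodic N ?v1" "periodic N ?v2" using pV by (auto intro: per_cmult)
  define L1 where "L1 = (\<lambda>i j. lap h (mu1 ?Q1 ?Q2) i j - c1 * lap h w1 i j + g1 i j)"
  define L2 where "L2 = (\<lambda>i j. lap h (mu2 ?Q1 ?Q2) i j - c2 * lap h w2 i j + g2 i j)"
  have pL: "periodic N L1" "periodic N L2" unfolding L1_def L2_def
    using per_mu[OF pQ] pw per_g by (auto intro!: per_add per_diff per_cmult per_lap)
  define D where "D = S2 N (\<lambda>i j. ?v1 i j * L1 i j) + S2 N (\<lambda>i j. ?v2 i j * L2 i j)"
  have deriv: "((\<lambda>s. J (\<lambda>i j. w1 i j + s * ?v1 i j) (\<lambda>i j. w2 i j + s * ?v2 i j)) has_real_derivative D) (at 0)"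
    unfolding D_def L1_def L2_def by (rule J_deriv_EL[OF pw pv pos])
  have Deq: "D = sig a 3 1 * L1 x y + sig a 3 2 * L2 x y"
  proof -
    have "S2 N (\<lambda>i j. ?v1 i j * L1 i j) = sig a 3 1 * S2 N (\<lambda>i j. ?V i j * L1 i j)"
      by (simp only: mult.assoc S2_cmult)
    moreover have "S2 N (\<lambda>i j. ?v2 i j * L2 i j) = sig a 3 2 * S2 N (\<lambda>i j. ?V i j * L2 i j)"
      by (simp only: mult.assoc S2_cmult)
    ultimately show ?thesis unfolding D_def using S2_ind_left[OF N1 pL(1)] S2_ind_left[OF N1 pL(2)] by simp
  qed
  define r where "r = e * h\<^sup>2 / 8"
  have r0: "r > 0" unfolding r_def using e0 hpos by simp
  have "D = 0"
  proof (rule DERIV_local_min[OF deriv r0], intro allI impI)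
    fix s :: real assume sr: "\<bar>0 - s\<bar> < r"
    have inD: "((\<lambda>i j. w1 i j + s * ?v1 i j), (\<lambda>i j. w2 i j + s * ?v2 i j)) \<in> Dom \<delta>"
      unfolding Dom_comp fst_conv snd_conv
    proof (intro conjI ballI allI)
      show "periodic N (\<lambda>i j. w1 i j + s * ?v1 i j)" using pw pv pV by (intro per_add per_cmult)
      show "periodic N (\<lambda>i j. w2 i j + s * ?v2 i j)" using pw pv pV by (intro per_add per_cmult)
      fix k :: nat and i j :: int assume k: "k \<in> {1,2,3}"
      have eq: "comp k (qw1 (\<lambda>i j. w1 i j + s * ?v1 i j)) (qw2 (\<lambda>i j. w2 i j + s * ?v2 i j)) i j
        = comp k ?Q1 ?Q2 i j + s * sig a 3 k * lap h ?V i j"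
        using comp_pert[OF a3 k, of w1 s ?V w2 i j] by simp
      have "\<bar>s * sig a 3 k * lap h ?V i j\<bar> \<le> r * 1 * (8 / h\<^sup>2)"
        unfolding abs_mult using sr sig_abs[of a 3 k] lVb[of i j]
        by (intro mult_mono) (simp_all)
      also have "r * 1 * (8 / h\<^sup>2) = e" unfolding r_def using hpos by (simp add: field_simps)
      finally have "\<bar>s * sig a 3 k * lap h ?V i j\<bar> \<le> e" .
      then show "\<delta> \<le> comp k (qw1 (\<lambda>i j. w1 i j + s * ?v1 i j)) (qw2 (\<lambda>i j. w2 i j + s * ?v2 i j)) i j"
        unfolding eq using slack[OF k, of i j] by (simp add: abs_le_iff)
    qed
    then have "J w1 w2 \<le> J (\<lambda>i j. w1 i j + s * ?v1 i j) (\<lambda>i j. w2 i j + s * ?v2 i j)"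
      using wmin by fastforce
    then show "J (\<lambda>i j. w1 i j + 0 * ?v1 i j) (\<lambda>i j. w2 i j + 0 * ?v2 i j)
        \<le> J (\<lambda>i j. w1 i j + s * ?v1 i j) (\<lambda>i j. w2 i j + s * ?v2 i j)" by simp
  qed
  then show ?thesis using Deq unfolding L1_def L2_def by simp
qed


lemma coef_bounds: "min (min (1 / M0 P) (1 / N0 P)) 1 \<le> coef k" "coef k \<le> max (max (1 / M0 P) (1 / N0 P)) 1"
  unfolding coef_def by auto

lemma existence: "\<exists>q1 q2. inGibbs N q1 q2 \<and> bdf2_step P h dt A1 A2 p1o p2o p1c p2c q1 q2"
proof -
  obtain ga1 where pg1: "periodic N ga1" and lg1: "\<And>i j. lap h ga1 i j = g1 i j"
    using poisson[OF hpos N1 per_g(1) S2_g(1)] by blast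
  obtain ga2 where pg2: "periodic N ga2" and lg2: "\<And>i j. lap h ga2 i j = g2 i j"
    using poisson[OF hpos N1 per_g(2) S2_g(2)] by blast
  obtain Mg1 where Mg1: "\<And>i j. \<bar>ga1 i j\<bar> \<le> Mg1" using per_bounded[OF N1 pg1] by blast
  obtain Mg2 where Mg2: "\<And>i j. \<bar>ga2 i j\<bar> \<le> Mg2" using per_bounded[OF N1 pg2] by blast
  obtain MB1 where MB1: "\<And>i j. \<bar>B1 i j\<bar> \<le> MB1" using per_bounded[OF N1 per_B(1)] by blast
  obtain MB2 where MB2: "\<And>i j. \<bar>B2 i j\<bar> \<le> MB2" using per_bounded[OF N1 per_B(2)] by blast
  define Mg where "Mg = max Mg1 Mg2"
  define MB where "MB = max MB1 MB2"
  have Mgb: "\<And>i j. \<bar>ga1 i j\<bar> \<le> Mg" "\<And>i j. \<bar>ga2 i j\<bar> \<le> Mg"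
    unfolding Mg_def using Mg1 Mg2 by (meson max.coboundedI1 max.coboundedI2)+
  have MBb: "\<And>i j. \<bar>B1 i j\<bar> \<le> MB" "\<And>i j. \<bar>B2 i j\<bar> \<le> MB"
    unfolding MB_def using MB1 MB2 by (meson max.coboundedI1 max.coboundedI2)+
  define Bd where "Bd = ((eps1 P)\<^sup>2 + (eps2 P)\<^sup>2 + 2 * (eps3 P)\<^sup>2) / h\<^sup>2 + MB + (A1 + A2) * dt * (8 / h\<^sup>2) + (c1 + c2) * Rb + Mg"
  have pcC: "\<And>k. periodic N (comp k p1c p2c)" using per_comp pc_per by auto
  have pcpos: "\<And>k i j. k \<in> {1,2,3} \<Longrightarrow> 0 < comp k p1c p2c i j"
    using pc_range unfolding comp_def by (auto, metis add.commute less_diff_eq pc_range(3))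
  define mm where "mm = (\<lambda>k. S2 N (comp k p1c p2c) / (real N * real N))"
  have mmpos: "0 < mm k" if k: "k \<in> {1,2,3}" for k
  proof -
    have "S2 N (\<lambda>i j. 0) < S2 N (comp k p1c p2c)" using pcpos[OF k] N1 by (intro S2_less) auto
    then show ?thesis unfolding mm_def using N1 by (simp add: S2_const)
  qed
  define mlow where "mlow = min (mm 1) (min (mm 2) (mm 3))"
  have mlow0: "0 < mlow" unfolding mlow_def using mmpos by auto
  have mlowle: "\<And>k. k \<in> {1,2,3} \<Longrightarrow> mlow \<le> S2 N (comp k p1c p2c) / (real N * real N)"
    unfolding mlow_def by (auto simp: mm_def)
  have lbk: "\<exists>e>0. \<forall>i j. e \<le> comp k p1c p2c i j" if k: "k \<in> {1,2,3}" for k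
    using per_pos_lb[OF N1 pcC[of k]] pcpos[OF k] by auto
  obtain pe1 where pe1: "pe1 > 0" "\<And>i j. pe1 \<le> comp 1 p1c p2c i j" using lbk[of 1] by auto
  obtain pe2 where pe2: "pe2 > 0" "\<And>i j. pe2 \<le> comp 2 p1c p2c i j" using lbk[of 2] by auto
  obtain pe3 where pe3: "pe3 > 0" "\<And>i j. pe3 \<le> comp 3 p1c p2c i j" using lbk[of 3] by auto
  define pmin where "pmin = min pe1 (min pe2 pe3)"
  have pmin0: "0 < pmin" unfolding pmin_def using pe1 pe2 pe3 by simp
  have pminle: "pmin \<le> pe1" "pmin \<le> pe2" "pmin \<le> pe3" unfolding pmin_def by auto
  define cmin where "cmin = min (min (1 / M0 P) (1 / N0 P)) 1"
  define cmax where "cmax = max (max (1 / M0 P) (1 / N0 P)) 1"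
  have cmin0: "0 < cmin" unfolding cmin_def using M0pos N0pos by simp
  define X where "X = (cmax * ln 4 + 4 * Bd + 1) / cmin"
  define \<delta> where "\<delta> = min (min (1/8) (mlow / 2)) (min pmin (exp (ln mlow - X)))"
  have d0: "0 < \<delta>" unfolding \<delta>_def using mlow0 pmin0 by simp
  have d8: "\<delta> \<le> 1/8" unfolding \<delta>_def by simp
  have dm: "\<delta> < mlow" unfolding \<delta>_def using mlow0 by simp
  have dp: "\<delta> \<le> pmin" unfolding \<delta>_def by simp
  have dX: "ln \<delta> \<le> ln mlow - X"
  proof -
    have "\<delta> \<le> exp (ln mlow - X)" unfolding \<delta>_def by simp
    then have "ln \<delta> \<le> ln (exp (ln mlow - X))" using d0 by (subst ln_le_cancel_iff) simp_all
    then show ?thesis by simp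
  qed
  have key: "coef a * (ln \<delta> - ln mlow) + coef b * ln 4 + 4 * Bd < 0" for a b
  proof -
    have neg: "ln \<delta> - ln mlow \<le> - X" using dX by simp
    have "coef a * (ln \<delta> - ln mlow) \<le> cmin * (ln \<delta> - ln mlow)"
    proof -
      have n: "ln \<delta> - ln mlow \<le> 0" using dm d0 by simp
      show ?thesis using mult_right_mono_neg[OF coef_bounds(1)[of a] n] unfolding cmin_def by simp
    qed
    also have "\<dots> \<le> cmin * (- X)" using mult_left_mono[OF neg, of cmin] cmin0 by simp
    also have "\<dots> = - (cmax * ln 4 + 4 * Bd + 1)" unfolding X_def using cmin0 by simp
    finally have c1: "coef a * (ln \<delta> - ln mlow) \<le> - (cmax * ln 4 + 4 * Bd + 1)" .
    have "coef b * ln 4 \<le> cmax * ln 4" using coef_bounds(2)[of b] unfolding cmax_def by (rule mult_right_mono) simp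
    then show ?thesis using c1 by linarith
  qed
  have zD: "((\<lambda>i j. 0), (\<lambda>i j. 0)) \<in> Dom \<delta>"
    unfolding Dom_comp fst_conv snd_conv
  proof (intro conjI ballI allI)
    show "periodic N (\<lambda>i j. 0)" by (rule per_const)
    show "periodic N (\<lambda>i j. 0)" by (rule per_const)
    fix k :: nat and i j :: int assume k: "k \<in> {1,2,3}"
    have q0: "qw1 (\<lambda>i j. 0) = p1c" "qw2 (\<lambda>i j. 0) = p2c"
      unfolding qw1_def qw2_def lap_def dx_def dy_def Dx_def Dy_def by auto
    have "\<delta> \<le> comp k p1c p2c i j"
      using k pe1(2)[of i j] pe2(2)[of i j] pe3(2)[of i j] pminle dp by auto
    then show "\<delta> \<le> comp k (qw1 (\<lambda>i j. 0)) (qw2 (\<lambda>i j. 0)) i j" unfolding q0 .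
  qed
  obtain p where pK: "p \<in> K \<delta>" and pmin: "\<forall>q\<in>Dom \<delta>. J (fst p) (snd p) \<le> J (fst q) (snd q)"
    using exists_min[OF d0 zD] by blast
  define w1 where "w1 = fst p"
  define w2 where "w2 = snd p"
  have wD: "(w1, w2) \<in> Dom \<delta>" using pK unfolding K_def w1_def w2_def by simp
  have wmin: "\<forall>q\<in>Dom \<delta>. J w1 w2 \<le> J (fst q) (snd q)" using pmin unfolding w1_def w2_def .
  have wb: "\<And>i j. \<bar>w1 i j\<bar> \<le> Rb" "\<And>i j. \<bar>w2 i j\<bar> \<le> Rb" using pK unfolding K_def w1_def w2_def by auto
  have Qge: "\<And>k i j. k \<in> {1,2,3} \<Longrightarrow> \<delta> \<le> comp k (qw1 w1) (qw2 w2) i j"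
    using wD unfolding Dom_comp by auto
  have pos: "\<And>i j. 0 < qw1 w1 i j \<and> 0 < qw2 w2 i j \<and> qw1 w1 i j + qw2 w2 i j < 1"
  proof -
    fix i j
    have "\<delta> \<le> comp 1 (qw1 w1) (qw2 w2) i j" "\<delta> \<le> comp 2 (qw1 w1) (qw2 w2) i j" "\<delta> \<le> comp 3 (qw1 w1) (qw2 w2) i j"
      using Qge by auto
    then show "0 < qw1 w1 i j \<and> 0 < qw2 w2 i j \<and> qw1 w1 i j + qw2 w2 i j < 1" using d0 unfolding comp_def by auto
  qed
  have Rb1: "\<And>i j. \<bar>R1 (qw1 w1) (qw2 w2) w1 ga1 i j\<bar> \<le> Bd"
    unfolding Bd_def by (rule R_bound(1)[OF pos wb Mgb MBb])
  have Rb2: "\<And>i j. \<bar>R2 (qw1 w1) (qw2 w2) w2 ga2 i j\<bar> \<le> Bd"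
    unfolding Bd_def by (rule R_bound(2)[OF pos wb Mgb MBb])
  have strict: "\<forall>k\<in>{1,2,3}. \<forall>i j. \<delta> < comp k (qw1 w1) (qw2 w2) i j"
    by (rule interior[OF d0 d8 dm mlowle pg1 pg2 lg1 lg2 Rb1 Rb2 key wD wmin])
  have pw: "periodic N w1" "periodic N w2" using wD unfolding Dom_def by auto
  let ?Q1 = "qw1 w1" and ?Q2 = "qw2 w2"
  have EL1: "lap h (mu1 ?Q1 ?Q2) i j - c1 * lap h w1 i j + g1 i j = 0" for i j
    using EL_step[OF wD d0 strict wmin, of 1 i j] by (simp add: sig_def)
  have EL2: "lap h (mu2 ?Q1 ?Q2) i j - c2 * lap h w2 i j + g2 i j = 0" for i j
    using EL_step[OF wD d0 strict wmin, of 2 i j] by (simp add: sig_def)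
  have mob: "mob1 P > 0" "mob2 P > 0" using vm unfolding valid_model_def by auto
  show ?thesis
  proof (intro exI conjI)
    show "inGibbs N ?Q1 ?Q2" unfolding inGibbs_def using per_qw pw pos by auto
    show "bdf2_step P h dt A1 A2 p1o p2o p1c p2c ?Q1 ?Q2"
      unfolding bdf2_iff
    proof (intro conjI allI)
      fix i j
      have l: "lap h (mu1 ?Q1 ?Q2) i j = c1 * (?Q1 i j - p1c i j) - g1 i j"
        using EL1[of i j] unfolding qw1_def by simp
      show "(3 * ?Q1 i j - 4 * p1c i j + p1o i j) / (2 * dt) = mob1 P * lap h (mu1 ?Q1 ?Q2) i j"
        unfolding l c1_def g1_def using mob dtpos by (simp add: field_simps)
    next
      fix i j
      have l: "lap h (mu2 ?Q1 ?Q2) i j = c2 * (?Q2 i j - p2c i j) - g2 i j"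
        using EL2[of i j] unfolding qw2_def by simp
      show "(3 * ?Q2 i j - 4 * p2c i j + p2o i j) / (2 * dt) = mob2 P * lap h (mu2 ?Q1 ?Q2) i j"
        unfolding l c2_def g2_def using mob dtpos by (simp add: field_simps)
    qed
  qed
qed

end


lemma face_mono:
  assumes A: "A > 0" and A': "A' > 0"
  shows "0 \<le> kappa' A * D\<^sup>2 * (A - A') + 2 * kappa A * D * (D - D')
          - (kappa' A' * D'\<^sup>2 * (A - A') + 2 * kappa A' * D' * (D - D'))"
proof -
  define r where "r = D / A"
  define r' where "r' = D' / A'"
  have D: "D = r * A" and D': "D' = r' * A'" unfolding r_def r'_def using A A' by simp_all
  have "kappa' A * D\<^sup>2 * (A - A') + 2 * kappa A * D * (D - D')
          - (kappa' A' * D'\<^sup>2 * (A - A') + 2 * kappa A' * D' * (D - D'))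
      = (r - r')\<^sup>2 * (A + A') / 36"
    unfolding D D' kappa_def kappa'_def using A A'
    by (simp add: field_simps power2_eq_square)
  also have "\<dots> \<ge> 0" using A A' by simp
  finally show ?thesis by simp
qed

lemma ln_mono_prod:
  fixes x y :: real
  assumes "x > 0" "y > 0"
  shows "0 \<le> (ln x - ln y) * (x - y)" and "(ln x - ln y) * (x - y) = 0 \<Longrightarrow> x = y"
proof -
  have c: "x < y \<Longrightarrow> ln x < ln y" "y < x \<Longrightarrow> ln y < ln x" using assms by simp_all
  show "0 \<le> (ln x - ln y) * (x - y)"
  proof (cases "x < y")
    case True then show ?thesis using c(1) by (simp add: mult_nonpos_nonpos)
  next
    case False then show ?thesis using c(2) by (cases "x = y") simp_all
  qed
  assume z: "(ln x - ln y) * (x - y) = 0"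
  show "x = y"
  proof (rule ccontr)
    assume "x \<noteq> y"
    then have "x < y \<or> y < x" by auto
    then have "(ln x - ln y) * (x - y) > 0" using c by (auto simp: mult_neg_neg)
    then show False using z by simp
  qed
qed


lemma Top_mono:
  assumes pu: "periodic N u" and pu': "periodic N u'" and pos: "\<And>i j. u i j > 0" and pos': "\<And>i j. u' i j > 0"
  shows "0 \<le> S2 N (\<lambda>i j. (Top h u i j - Top h u' i j) * (u i j - u' i j))"
proof -
  let ?d = "\<lambda>i j. u i j - u' i j"
  have pd: "periodic N ?d" using pu pu' by (rule per_diff)
  have Ad: "Ax ?d i j = Ax u i j - Ax u' i j" "Ay ?d i j = Ay u i j - Ay u' i j"
     "Dx h ?d i j = Dx h u i j - Dx h u' i j" "Dy h ?d i j = Dy h u i j - Dy h u' i j" for i j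
    unfolding Ax_def Ay_def Dx_def Dy_def by (cases "h = 0"; simp add: field_simps)+
  have "S2 N (\<lambda>i j. (Top h u i j - Top h u' i j) * ?d i j) = S2 N (\<lambda>i j. Top h u i j * ?d i j) - S2 N (\<lambda>i j. Top h u' i j * ?d i j)"
  proof -
    have "S2 N (\<lambda>i j. (Top h u i j - Top h u' i j) * ?d i j) = S2 N (\<lambda>i j. Top h u i j * ?d i j - Top h u' i j * ?d i j)"
      by (rule S2_cong) (simp add: algebra_simps)
    then show ?thesis by (simp only: S2_diff)
  qed
  also have "\<dots> = S2 N (\<lambda>i j.
      (kappa' (Ax u i j) * (Dx h u i j)\<^sup>2 * (Ax u i j - Ax u' i j) + 2 * kappa (Ax u i j) * Dx h u i j * (Dx h u i j - Dx h u' i j)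
    + kappa' (Ay u i j) * (Dy h u i j)\<^sup>2 * (Ay u i j - Ay u' i j) + 2 * kappa (Ay u i j) * Dy h u i j * (Dy h u i j - Dy h u' i j))
    - (kappa' (Ax u' i j) * (Dx h u' i j)\<^sup>2 * (Ax u i j - Ax u' i j) + 2 * kappa (Ax u' i j) * Dx h u' i j * (Dx h u i j - Dx h u' i j)
    + kappa' (Ay u' i j) * (Dy h u' i j)\<^sup>2 * (Ay u i j - Ay u' i j) + 2 * kappa (Ay u' i j) * Dy h u' i j * (Dy h u i j - Dy h u' i j)))"
    unfolding sbp_Top[OF pu pd] sbp_Top[OF pu' pd] Ad S2_diff ..
  also have "0 \<le> \<dots>"
  proof (rule S2_nonneg)
    fix i j
    have Ap: "Ax u i j > 0" "Ax u' i j > 0" "Ay u i j > 0" "Ay u' i j > 0"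
      using pos pos' by (simp_all add: Ax_def Ay_def add_pos_pos)
    show "0 \<le> (kappa' (Ax u i j) * (Dx h u i j)\<^sup>2 * (Ax u i j - Ax u' i j) + 2 * kappa (Ax u i j) * Dx h u i j * (Dx h u i j - Dx h u' i j)
    + kappa' (Ay u i j) * (Dy h u i j)\<^sup>2 * (Ay u i j - Ay u' i j) + 2 * kappa (Ay u i j) * Dy h u i j * (Dy h u i j - Dy h u' i j))
    - (kappa' (Ax u' i j) * (Dx h u' i j)\<^sup>2 * (Ax u i j - Ax u' i j) + 2 * kappa (Ax u' i j) * Dx h u' i j * (Dx h u i j - Dx h u' i j)
    + kappa' (Ay u' i j) * (Dy h u' i j)\<^sup>2 * (Ay u i j - Ay u' i j) + 2 * kappa (Ay u' i j) * Dy h u' i j * (Dy h u i j - Dy h u' i j))"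
      using face_mono[OF Ap(1) Ap(2), of "Dx h u i j" "Dx h u' i j"] face_mono[OF Ap(3) Ap(4), of "Dy h u i j" "Dy h u' i j"]
      by linarith
  qed
  finally show ?thesis by simp
qed


lemma lap_diff: "lap h (\<lambda>i j. f i j - g i j) i j = lap h f i j - lap h g i j"
  unfolding lap_def dx_def dy_def Dx_def Dy_def by (cases "h = 0"; simp add: field_simps)

lemma alg_uniq:
  fixes a a' b b' Sa Sa' Sb Sb' E1 E2 E3 t1 t1' t2 t2' t3 t3' H1 H2 A1 A2 l1 l1' l2 l2' lp1 lp2 :: real
  shows "(a - a') * ((Sa + E1 * t1 - E3 * t3 + H1 - A1 * (l1 - lp1)) - (Sa' + E1 * t1' - E3 * t3' + H1 - A1 * (l1' - lp1)))
       + (b - b') * ((Sb + E2 * t2 - E3 * t3 + H2 - A2 * (l2 - lp2)) - (Sb' + E2 * t2' - E3 * t3' + H2 - A2 * (l2' - lp2)))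
     = ((a - a') * (Sa - Sa') + (b - b') * (Sb - Sb')) + E1 * ((t1 - t1') * (a - a')) + E2 * ((t2 - t2') * (b - b'))
       + E3 * ((t3 - t3') * ((1 - a - b) - (1 - a' - b'))) - A1 * ((a - a') * (l1 - l1')) - A2 * ((b - b') * (l2 - l2'))"
  by (simp add: algebra_simps)

lemma ln_frac:
  fixes c M x :: real
  assumes "c > 0" "M > 0" "x > 0"
  shows "ln (c * x / M) = ln c + ln x - ln M"
proof -
  have "ln (c * x / M) = ln (c * x) - ln M" using assms by (intro ln_divide_pos) simp_all
  also have "ln (c * x) = ln c + ln x" using assms by (intro ln_mult_pos) simp_all
  finally show ?thesis .
qed

context setting
begin

lemma mean_pres:
  assumes G: "inGibbs N q1 q2" and S: "bdf2_step P h dt A1 A2 p1o p2o p1c p2c q1 q2"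
  shows "S2 N q1 = S2 N p1c" "S2 N q2 = S2 N p2c"
proof -
  have pq: "periodic N q1" "periodic N q2" using G unfolding inGibbs_def by auto
  have e1: "\<And>i j. (3 * q1 i j - 4 * p1c i j + p1o i j) / (2 * dt) = mob1 P * lap h (mu1 q1 q2) i j"
   and e2: "\<And>i j. (3 * q2 i j - 4 * p2c i j + p2o i j) / (2 * dt) = mob2 P * lap h (mu2 q1 q2) i j"
    using S unfolding bdf2_iff by auto
  have l0: "S2 N (lap h (mu1 q1 q2)) = 0" "S2 N (lap h (mu2 q1 q2)) = 0"
    using S2_lap per_mu[OF pq] by auto
  have "S2 N (\<lambda>i j. (3 * q1 i j - 4 * p1c i j + p1o i j) / (2 * dt)) = S2 N (\<lambda>i j. mob1 P * lap h (mu1 q1 q2) i j)"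
    using e1 by simp
  then have "(3 * S2 N q1 - 4 * S2 N p1c + S2 N p1o) / (2 * dt) = 0"
    by (simp only: S2_divc S2_add S2_diff S2_cmult l0)
  then show "S2 N q1 = S2 N p1c" using m1 dtpos by simp
  have "S2 N (\<lambda>i j. (3 * q2 i j - 4 * p2c i j + p2o i j) / (2 * dt)) = S2 N (\<lambda>i j. mob2 P * lap h (mu2 q1 q2) i j)"
    using e2 by simp
  then have "(3 * S2 N q2 - 4 * S2 N p2c + S2 N p2o) / (2 * dt) = 0"
    by (simp only: S2_divc S2_add S2_diff S2_cmult l0)
  then show "S2 N q2 = S2 N p2c" using m2 dtpos by simp
qed

lemma uniqueness:
  assumes Gq: "inGibbs N q1 q2" and Sq: "bdf2_step P h dt A1 A2 p1o p2o p1c p2c q1 q2"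
    and Gr': "inGibbs N r1 r2" and Sr: "bdf2_step P h dt A1 A2 p1o p2o p1c p2c r1 r2"
  shows "q1 = r1 \<and> q2 = r2"
proof -
  have pq: "periodic N q1" "periodic N q2" and posq: "\<And>i j. 0 < q1 i j \<and> 0 < q2 i j \<and> q1 i j + q2 i j < 1"
    using Gq unfolding inGibbs_def by auto
  have pr: "periodic N r1" "periodic N r2" and posr: "\<And>i j. 0 < r1 i j \<and> 0 < r2 i j \<and> r1 i j + r2 i j < 1"
    using Gr' unfolding inGibbs_def by auto
  let ?e1 = "\<lambda>i j. q1 i j - r1 i j" and ?e2 = "\<lambda>i j. q2 i j - r2 i j"
  let ?W1 = "\<lambda>i j. mu1 q1 q2 i j - mu1 r1 r2 i j" and ?W2 = "\<lambda>i j. mu2 q1 q2 i j - mu2 r1 r2 i j"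
  have pe: "periodic N ?e1" "periodic N ?e2" using pq pr by (auto intro: per_diff)
  have pW: "periodic N ?W1" "periodic N ?W2" using per_mu[OF pq(1,2)] per_mu[OF pr(1,2)] by (auto intro: per_diff)
  have mob: "mob1 P > 0" "mob2 P > 0" using vm unfolding valid_model_def by auto
  have eW1: "?e1 i j = (2 * dt * mob1 P / 3) * lap h ?W1 i j" for i j
  proof -
    have a: "(3 * q1 i j - 4 * p1c i j + p1o i j) / (2 * dt) = mob1 P * lap h (mu1 q1 q2) i j" using Sq unfolding bdf2_iff by auto
    have b: "(3 * r1 i j - 4 * p1c i j + p1o i j) / (2 * dt) = mob1 P * lap h (mu1 r1 r2) i j" using Sr unfolding bdf2_iff by auto
    show ?thesis unfolding lap_diff using a b dtpos by (simp add: field_simps)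
  qed
  have eW2: "?e2 i j = (2 * dt * mob2 P / 3) * lap h ?W2 i j" for i j
  proof -
    have a: "(3 * q2 i j - 4 * p2c i j + p2o i j) / (2 * dt) = mob2 P * lap h (mu2 q1 q2) i j" using Sq unfolding bdf2_iff by auto
    have b: "(3 * r2 i j - 4 * p2c i j + p2o i j) / (2 * dt) = mob2 P * lap h (mu2 r1 r2) i j" using Sr unfolding bdf2_iff by auto
    show ?thesis unfolding lap_diff using a b dtpos by (simp add: field_simps)
  qed
  have neg1: "S2 N (\<lambda>i j. ?e1 i j * ?W1 i j) \<le> 0"
  proof -
    have "S2 N (\<lambda>i j. ?e1 i j * ?W1 i j) = S2 N (\<lambda>i j. (2 * dt * mob1 P / 3) * (?W1 i j * lap h ?W1 i j))"
      by (rule S2_cong) (simp only: eW1 mult_ac)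
    also have "\<dots> = (2 * dt * mob1 P / 3) * S2 N (\<lambda>i j. ?W1 i j * lap h ?W1 i j)" by (rule S2_cmult)
    also have "\<dots> = (2 * dt * mob1 P / 3) * (- Gr N h ?W1 ?W1)" using sbp_lap[OF pW(1) pW(1)] by simp
    also have "\<dots> \<le> 0" using dtpos mob Gr_nonneg[where N=N and h=h and f="?W1"] by (simp add: mult_nonneg_nonneg)
    finally show ?thesis .
  qed
  have neg2: "S2 N (\<lambda>i j. ?e2 i j * ?W2 i j) \<le> 0"
  proof -
    have "S2 N (\<lambda>i j. ?e2 i j * ?W2 i j) = S2 N (\<lambda>i j. (2 * dt * mob2 P / 3) * (?W2 i j * lap h ?W2 i j))"
      by (rule S2_cong) (simp only: eW2 mult_ac)
    also have "\<dots> = (2 * dt * mob2 P / 3) * S2 N (\<lambda>i j. ?W2 i j * lap h ?W2 i j)" by (rule S2_cmult)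
    also have "\<dots> = (2 * dt * mob2 P / 3) * (- Gr N h ?W2 ?W2)" using sbp_lap[OF pW(2) pW(2)] by simp
    also have "\<dots> \<le> 0" using dtpos mob Gr_nonneg[where N=N and h=h and f="?W2"] by (simp add: mult_nonneg_nonneg)
    finally show ?thesis .
  qed
  let ?u3 = "\<lambda>i j. 1 - q1 i j - q2 i j" and ?v3 = "\<lambda>i j. 1 - r1 i j - r2 i j"
  define SP where "SP = (\<lambda>i j. (q1 i j - r1 i j) * (dSa P (q1 i j) (q2 i j) - dSa P (r1 i j) (r2 i j))
     + (q2 i j - r2 i j) * (dSb P (q1 i j) (q2 i j) - dSb P (r1 i j) (r2 i j)))"
  have pt: "?e1 i j * ?W1 i j + ?e2 i j * ?W2 i j = SP i j
     + (eps1 P)\<^sup>2 * ((Top h q1 i j - Top h r1 i j) * (q1 i j - r1 i j))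
     + (eps2 P)\<^sup>2 * ((Top h q2 i j - Top h r2 i j) * (q2 i j - r2 i j))
     + (eps3 P)\<^sup>2 * ((Top h ?u3 i j - Top h ?v3 i j) * (?u3 i j - ?v3 i j))
     - A1 * dt * ((q1 i j - r1 i j) * (lap h q1 i j - lap h r1 i j))
     - A2 * dt * ((q2 i j - r2 i j) * (lap h q2 i j - lap h r2 i j))" for i j
    unfolding SP_def mu1_def mu2_def dG1_def dG2_def lap_diff using alg_uniq by simp
  have lapE1: "S2 N (\<lambda>i j. (q1 i j - r1 i j) * (lap h q1 i j - lap h r1 i j)) = - Gr N h ?e1 ?e1"
    using sbp_lap[OF pe(1) pe(1), of h] unfolding lap_diff by simp
  have lapE2: "S2 N (\<lambda>i j. (q2 i j - r2 i j) * (lap h q2 i j - lap h r2 i j)) = - Gr N h ?e2 ?e2"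
    using sbp_lap[OF pe(2) pe(2), of h] unfolding lap_diff by simp
  have sum: "S2 N (\<lambda>i j. ?e1 i j * ?W1 i j) + S2 N (\<lambda>i j. ?e2 i j * ?W2 i j) = S2 N SP
     + (eps1 P)\<^sup>2 * S2 N (\<lambda>i j. (Top h q1 i j - Top h r1 i j) * (q1 i j - r1 i j))
     + (eps2 P)\<^sup>2 * S2 N (\<lambda>i j. (Top h q2 i j - Top h r2 i j) * (q2 i j - r2 i j))
     + (eps3 P)\<^sup>2 * S2 N (\<lambda>i j. (Top h ?u3 i j - Top h ?v3 i j) * (?u3 i j - ?v3 i j))
     - A1 * dt * (- Gr N h ?e1 ?e1) - A2 * dt * (- Gr N h ?e2 ?e2)"
    unfolding S2_add[symmetric] pt lapE1[symmetric] lapE2[symmetric]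
    by (simp only: S2_add S2_diff S2_cmult)
  have pu: "periodic N ?u3" "periodic N ?v3" by (intro per_diff per_const pq pr)+
  have t1: "0 \<le> S2 N (\<lambda>i j. (Top h q1 i j - Top h r1 i j) * (q1 i j - r1 i j))"
    using Top_mono[OF pq(1) pr(1)] posq posr by blast
  have t2: "0 \<le> S2 N (\<lambda>i j. (Top h q2 i j - Top h r2 i j) * (q2 i j - r2 i j))"
    using Top_mono[OF pq(2) pr(2)] posq posr by blast
  have t3: "0 \<le> S2 N (\<lambda>i j. (Top h ?u3 i j - Top h ?v3 i j) * (?u3 i j - ?v3 i j))"
  proof (rule Top_mono[OF pu])
    show "\<And>i j. 0 < 1 - q1 i j - q2 i j" using posq by (smt (verit))
    show "\<And>i j. 0 < 1 - r1 i j - r2 i j" using posr by (smt (verit))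
  qed
  have al: "alpha P > 0" "beta P > 0" using alpha_pos beta_pos M0pos N0pos by auto
  have SPd: "SP i j = 1 / M0 P * ((ln (q1 i j) - ln (r1 i j)) * (q1 i j - r1 i j))
      + 1 / N0 P * ((ln (q2 i j) - ln (r2 i j)) * (q2 i j - r2 i j))
      + (ln (?u3 i j) - ln (?v3 i j)) * (?u3 i j - ?v3 i j)" for i j
  proof -
    have p: "0 < q1 i j" "0 < q2 i j" "0 < r1 i j" "0 < r2 i j" using posq posr by auto
    show ?thesis unfolding SP_def dSa_def dSb_def
      ln_frac[OF al(1) M0pos p(1)] ln_frac[OF al(1) M0pos p(3)] ln_frac[OF al(2) N0pos p(2)] ln_frac[OF al(2) N0pos p(4)]
      by (simp add: algebra_simps diff_divide_distrib add_divide_distrib)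
  qed
  have SPterms: "0 \<le> (ln (q1 i j) - ln (r1 i j)) * (q1 i j - r1 i j)"
      "0 \<le> (ln (q2 i j) - ln (r2 i j)) * (q2 i j - r2 i j)"
      "0 \<le> (ln (?u3 i j) - ln (?v3 i j)) * (?u3 i j - ?v3 i j)" for i j
  proof -
    have p: "0 < q1 i j" "0 < q2 i j" "0 < r1 i j" "0 < r2 i j" "0 < ?u3 i j" "0 < ?v3 i j"
      using posq[of i j] posr[of i j] by auto
    show "0 \<le> (ln (q1 i j) - ln (r1 i j)) * (q1 i j - r1 i j)" by (rule ln_mono_prod(1)[OF p(1) p(3)])
    show "0 \<le> (ln (q2 i j) - ln (r2 i j)) * (q2 i j - r2 i j)" by (rule ln_mono_prod(1)[OF p(2) p(4)])
    show "0 \<le> (ln (?u3 i j) - ln (?v3 i j)) * (?u3 i j - ?v3 i j)" by (rule ln_mono_prod(1)[OF p(5) p(6)])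
  qed
  have SPnn: "0 \<le> SP i j" for i j
  proof -
    have a: "0 \<le> 1 / M0 P * ((ln (q1 i j) - ln (r1 i j)) * (q1 i j - r1 i j))" using SPterms(1)[of i j] M0pos by simp
    have b: "0 \<le> 1 / N0 P * ((ln (q2 i j) - ln (r2 i j)) * (q2 i j - r2 i j))" using SPterms(2)[of i j] N0pos by simp
    show ?thesis unfolding SPd using a b SPterms(3)[of i j] by linarith
  qed
  have G0: "0 \<le> Gr N h ?e1 ?e1" "0 \<le> Gr N h ?e2 ?e2" by (rule Gr_nonneg)+
  have eps: "0 \<le> (eps1 P)\<^sup>2" "0 \<le> (eps2 P)\<^sup>2" "0 \<le> (eps3 P)\<^sup>2" by simp_all
  have AA: "0 \<le> A1 * dt" "0 \<le> A2 * dt" using A1 A2 dtpos by simp_all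
  have "S2 N SP \<le> 0"
  proof -
    have "0 \<le> (eps1 P)\<^sup>2 * S2 N (\<lambda>i j. (Top h q1 i j - Top h r1 i j) * (q1 i j - r1 i j))"
      using eps(1) t1 by simp
    moreover have "0 \<le> (eps2 P)\<^sup>2 * S2 N (\<lambda>i j. (Top h q2 i j - Top h r2 i j) * (q2 i j - r2 i j))"
      using eps(2) t2 by simp
    moreover have "0 \<le> (eps3 P)\<^sup>2 * S2 N (\<lambda>i j. (Top h ?u3 i j - Top h ?v3 i j) * (?u3 i j - ?v3 i j))"
      using eps(3) t3 by simp
    moreover have "0 \<le> A1 * dt * Gr N h ?e1 ?e1" "0 \<le> A2 * dt * Gr N h ?e2 ?e2" using AA G0 by simp_all
    ultimately show ?thesis using sum neg1 neg2 by linarith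
  qed
  then have SP0: "S2 N SP = 0" using S2_nonneg[of N SP] SPnn by fastforce
  have SPz: "SP i j = 0" if "1 \<le> i" "i \<le> int N" "1 \<le> j" "j \<le> int N" for i j
  proof -
    have "SP i j \<le> S2 N SP" by (rule S2_term_le[OF SPnn that])
    then show ?thesis using SP0 SPnn[of i j] by simp
  qed
  have eqI: "q1 i j = r1 i j \<and> q2 i j = r2 i j" if "1 \<le> i" "i \<le> int N" "1 \<le> j" "j \<le> int N" for i j
  proof -
    have p: "0 < q1 i j" "0 < q2 i j" "0 < r1 i j" "0 < r2 i j" using posq[of i j] posr[of i j] by auto
    have z: "1 / M0 P * ((ln (q1 i j) - ln (r1 i j)) * (q1 i j - r1 i j))
      + 1 / N0 P * ((ln (q2 i j) - ln (r2 i j)) * (q2 i j - r2 i j))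
      + (ln (?u3 i j) - ln (?v3 i j)) * (?u3 i j - ?v3 i j) = 0" using SPz[OF that] unfolding SPd .
    have a: "0 \<le> 1 / M0 P * ((ln (q1 i j) - ln (r1 i j)) * (q1 i j - r1 i j))" using SPterms(1)[of i j] M0pos by simp
    have b: "0 \<le> 1 / N0 P * ((ln (q2 i j) - ln (r2 i j)) * (q2 i j - r2 i j))" using SPterms(2)[of i j] N0pos by simp
    have "1 / M0 P * ((ln (q1 i j) - ln (r1 i j)) * (q1 i j - r1 i j)) = 0"
      using z a b SPterms(3)[of i j] by linarith
    then have "(ln (q1 i j) - ln (r1 i j)) * (q1 i j - r1 i j) = 0" using M0pos by simp
    moreover have "1 / N0 P * ((ln (q2 i j) - ln (r2 i j)) * (q2 i j - r2 i j)) = 0"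
      using z a b SPterms(3)[of i j] by linarith
    then have "(ln (q2 i j) - ln (r2 i j)) * (q2 i j - r2 i j) = 0" using N0pos by simp
    ultimately show ?thesis using ln_mono_prod(2)[OF p(1) p(3)] ln_mono_prod(2)[OF p(2) p(4)] by blast
  qed
  have "q1 i j = r1 i j \<and> q2 i j = r2 i j" for i j
  proof -
    have "q1 (rp N i) (rp N j) = r1 (rp N i) (rp N j) \<and> q2 (rp N i) (rp N j) = r2 (rp N i) (rp N j)"
      using eqI rp_bounds[OF N1] by blast
    then show ?thesis using per_rp pq pr by metis
  qed
  then show ?thesis by (auto intro!: ext)
qed

end


lemma gmean_S2: "L > 0 \<Longrightarrow> N \<ge> 1 \<Longrightarrow> gmean L N f = gmean L N g \<longleftrightarrow> S2 N f = S2 N g"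
  unfolding gmean_def S2_def[symmetric] by simp

theorem theorem3p2:
  fixes P :: model and L dt A1 A2 :: real and N :: nat
    and p1o p2o p1c p2c :: grid
  assumes "valid_model P" and "L > 0" and "N \<ge> 1"
    and "dt > 0" and "A1 \<ge> 0" and "A2 \<ge> 0"
    and "inGibbs N p1o p2o" and "inGibbs N p1c p2c"
    and "gmean L N p1o = gmean L N p1c" and "gmean L N p2o = gmean L N p2c"
  shows "(\<exists>!q. inGibbs N (fst q) (snd q) \<and>
                bdf2_step P (L / real N) dt A1 A2 p1o p2o p1c p2c (fst q) (snd q))
       \<and> (\<forall>q1 q2. inGibbs N q1 q2 \<and> bdf2_step P (L / real N) dt A1 A2 p1o p2o p1c p2c q1 q2
            \<longrightarrow> gmean L N q1 = gmean L N p1c \<and> gmean L N q2 = gmean L N p2c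
              \<and> (\<forall>i j. q1 i j > 0 \<and> q2 i j > 0 \<and> q1 i j + q2 i j < 1))"
proof -
  have h: "L / real N > 0" using assms(2,3) by simp
  have m1: "S2 N p1o = S2 N p1c" using assms(9) gmean_S2[OF assms(2,3)] by blast
  have m2: "S2 N p2o = S2 N p2c" using assms(10) gmean_S2[OF assms(2,3)] by blast
  interpret S: setting P N "L / real N" dt A1 A2 p1o p2o p1c p2c
    by unfold_locales (use assms h m1 m2 in auto)
  obtain q1 q2 where q: "inGibbs N q1 q2" "bdf2_step P (L / real N) dt A1 A2 p1o p2o p1c p2c q1 q2"
    using S.existence by blast
  have ex: "\<exists>!q. inGibbs N (fst q) (snd q) \<and> bdf2_step P (L / real N) dt A1 A2 p1o p2o p1c p2c (fst q) (snd q)"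
  proof (rule ex1I[of _ "(q1, q2)"])
    show "inGibbs N (fst (q1, q2)) (snd (q1, q2)) \<and> bdf2_step P (L / real N) dt A1 A2 p1o p2o p1c p2c (fst (q1, q2)) (snd (q1, q2))"
      using q by simp
    fix r assume r: "inGibbs N (fst r) (snd r) \<and> bdf2_step P (L / real N) dt A1 A2 p1o p2o p1c p2c (fst r) (snd r)"
    then have "fst r = q1 \<and> snd r = q2" using S.uniqueness q by blast
    then show "r = (q1, q2)" by (simp add: prod_eq_iff)
  qed
  have rest: "\<forall>q1 q2. inGibbs N q1 q2 \<and> bdf2_step P (L / real N) dt A1 A2 p1o p2o p1c p2c q1 q2
            \<longrightarrow> gmean L N q1 = gmean L N p1c \<and> gmean L N q2 = gmean L N p2c
              \<and> (\<forall>i j. q1 i j > 0 \<and> q2 i j > 0 \<and> q1 i j + q2 i j < 1)"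
  proof (intro allI impI)
    fix r1 r2 assume r: "inGibbs N r1 r2 \<and> bdf2_step P (L / real N) dt A1 A2 p1o p2o p1c p2c r1 r2"
    have "S2 N r1 = S2 N p1c" "S2 N r2 = S2 N p2c" using S.mean_pres r by blast+
    then have "gmean L N r1 = gmean L N p1c" "gmean L N r2 = gmean L N p2c" using gmean_S2[OF assms(2,3)] by blast+
    moreover have "\<forall>i j. r1 i j > 0 \<and> r2 i j > 0 \<and> r1 i j + r2 i j < 1" using r unfolding inGibbs_def by blast
    ultimately show "gmean L N r1 = gmean L N p1c \<and> gmean L N r2 = gmean L N p2c
              \<and> (\<forall>i j. r1 i j > 0 \<and> r2 i j > 0 \<and> r1 i j + r2 i j < 1)" by blast
  qed
  show ?thesis using ex rest by blast
qed


end
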